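(* Let $U$ be a nonconstant stationary solution. If the derivative $U_x$ has at least three zeros in $[0,1)$, then $U$ is linearly unstable.
   Context: $\mathbb{T}=[0,1]$ with endpoints identified; $D,\kappa>0$; stationary solutions $U\in W^{2,2}(\mathbb{T})$ solve $0=DU_{xx}-U+\kappa e^U/\int_0^1e^Udy$ with periodic boundary conditions. Linearization: $\mathcal L\varphi=D\varphi_{xx}+\big(\kappa\frac{e^U}{\int_0^1e^U}-1\big)\varphi-\kappa\frac{e^U}{(\int_0^1e^U)^2}\int_0^1e^U\varphi\,dy$ on $L^2(\mathbb{T})$, domain $W^{2,2}(\mathbb{T})$. $U$ is linearly unstable if $\mathcal L$ has an eigenvalue with positive real part. *)

theory Defs
  imports "HOL-Analysis.Analysis"
begin

text \<open>Functions on the torus T = [0,1]/{0~1} are represented as 1-periodic functions on the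
real line.  The periodic Sobolev space W^{2,2}(T) is described in the usual one-dimensional way:
f is 1-periodic and continuously differentiable, and its derivative is an indefinite integral of
a function g that is square integrable over one period; g is then the (a.e. determined) weak
second derivative of f.\<close>

definition per_weak_dd :: "(real \<Rightarrow> 'a::euclidean_space) \<Rightarrow> (real \<Rightarrow> 'a) \<Rightarrow> bool" where
  "per_weak_dd f g \<longleftrightarrow>
     (\<forall>x. f (x + 1) = f x) \<and>
     (\<exists>f'. (\<forall>x. (f has_vector_derivative f' x) (at x)) \<and>
           (\<forall>a b. a \<le> b \<longrightarrow> (g has_integral (f' b - f' a)) {a..b})) \<and>
     (\<lambda>x. (norm (g x))\<^sup>2) integrable_on {0..1}"

definition W22_per :: "(real \<Rightarrow> 'a::euclidean_space) \<Rightarrow> bool" where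
  "W22_per f \<longleftrightarrow> (\<exists>g. per_weak_dd f g)"

definition stationary_solution :: "real \<Rightarrow> real \<Rightarrow> (real \<Rightarrow> real) \<Rightarrow> bool" where
  "stationary_solution D \<kappa> U \<longleftrightarrow>
     (\<exists>g. per_weak_dd U g \<and>
        (AE x in lebesgue. D * g x - U x + \<kappa> * exp (U x) / integral {0..1} (\<lambda>y. exp (U y)) = 0))"

text \<open>The linearization L on L^2(T) (complexified), domain W^{2,2}(T).
lambda is an eigenvalue iff there is a nonzero phi in the domain with L phi = lambda phi
(in L^2, i.e. almost everywhere).  Domain elements are continuous, so nonzero in L^2 is the same
as not identically zero.\<close>

definition lin_eigenvalue :: "real \<Rightarrow> real \<Rightarrow> (real \<Rightarrow> real) \<Rightarrow> complex \<Rightarrow> bool" where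
  "lin_eigenvalue D \<kappa> U \<mu> \<longleftrightarrow>
     (let I = integral {0..1} (\<lambda>y. exp (U y)) in
      \<exists>\<phi> g. per_weak_dd \<phi> g \<and> \<phi> \<noteq> (\<lambda>_. 0) \<and>
        (AE x in lebesgue.
           of_real D * g x + of_real (\<kappa> * exp (U x) / I - 1) * \<phi> x
           - of_real (\<kappa> * exp (U x) / I\<^sup>2) * integral {0..1} (\<lambda>y. of_real (exp (U y)) * \<phi> y)
           = \<mu> * \<phi> x))"

definition linearly_unstable :: "real \<Rightarrow> real \<Rightarrow> (real \<Rightarrow> real) \<Rightarrow> bool" where
  "linearly_unstable D \<kappa> U \<longleftrightarrow> (\<exists>\<mu>. lin_eigenvalue D \<kappa> U \<mu> \<and> Re \<mu> > 0)"

end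

theory Submission
  imports Defs
begin

lemma gronwall_fwd:
  fixes E E' :: "real \<Rightarrow> real"
  assumes der: "\<And>t. t \<in> {c..d} \<Longrightarrow> (E has_real_derivative E' t) (at t within {c..d})"
  and le: "\<And>t. t \<in> {c..d} \<Longrightarrow> E' t \<le> K * E t + B"
  and K: "0 \<le> K" and B: "0 \<le> B"
  and x: "x \<in> {c..d}"
  shows "E x \<le> (E c + B * (x - c)) * exp (K * (x - c))"
proof -
  define G where "G t = exp (- K * (t - c)) * E t - B * (t - c)" for t
  define G' where "G' t = exp (- K * (t - c)) * (E' t - K * E t) - B" for t
  have dG: "(G has_real_derivative G' t) (at t within {c..x})" if "t \<in> {c..x}" for t
  proof -
    have "(E has_real_derivative E' t) (at t within {c..x})"
      using der[of t] that x by (auto intro: DERIV_subset)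
    then show ?thesis unfolding G_def G'_def
      by (auto intro!: derivative_eq_intros simp: algebra_simps)
  qed
  have G'le: "G' t \<le> 0" if "t \<in> {c..x}" for t
  proof -
    have "exp (- K * (t - c)) \<le> 1" using that K by (simp add: mult_nonneg_nonneg)
    moreover have "E' t - K * E t \<le> B" using le[of t] that x by auto
    ultimately have "exp (- K * (t - c)) * (E' t - K * E t) \<le> B"
    proof -
      have "exp (- K * (t - c)) * (E' t - K * E t) \<le> exp (- K * (t - c)) * B"
        using \<open>E' t - K * E t \<le> B\<close> by (intro mult_left_mono) auto
      also have "\<dots> \<le> 1 * B" using \<open>exp (- K * (t - c)) \<le> 1\<close> B by (intro mult_right_mono) auto
      finally show ?thesis by simp
    qed
    then show ?thesis unfolding G'_def by simp
  qed
  have "\<exists>t\<in>{c..x}. G x - G c = (\<lambda>h. G' t * h) (x - c)"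
    using x dG by (intro mvt_very_simple) (auto simp: has_field_derivative_def)
  then obtain t where t: "t \<in> {c..x}" "G x - G c = G' t * (x - c)" by auto
  have "G' t * (x - c) \<le> 0" using G'le[OF t(1)] x by (intro mult_nonpos_nonneg) auto
  then have "G x \<le> G c" using t(2) by linarith
  then have "exp (- K * (x - c)) * E x \<le> E c + B * (x - c)" unfolding G_def by simp
  then have "exp (K * (x - c)) * (exp (- K * (x - c)) * E x) \<le> exp (K * (x - c)) * (E c + B * (x - c))"
    by (intro mult_left_mono) auto
  moreover have "exp (K * (x - c)) * exp (- K * (x - c)) = 1" by (simp add: exp_add[symmetric])
  ultimately have "E x \<le> exp (K * (x - c)) * (E c + B * (x - c))"
    by (metis mult.assoc mult_1)
  then show ?thesis by (simp add: mult.commute)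
qed

lemma two_ab_le: "2 * a * b \<le> a\<^sup>2 + (b::real)\<^sup>2"
proof -
  have "0 \<le> (a - b)\<^sup>2" by simp
  then show ?thesis by (simp add: power2_eq_square algebra_simps)
qed

lemma ode_diff_bound:
  fixes w u z :: "real \<Rightarrow> real"
  assumes dw: "\<And>t. t \<in> {c..d} \<Longrightarrow> (w has_real_derivative u t) (at t within {c..d})"
  and du: "\<And>t. t \<in> {c..d} \<Longrightarrow> (u has_real_derivative z t) (at t within {c..d})"
  and bd: "\<And>t. t \<in> {c..d} \<Longrightarrow> \<bar>z t\<bar> \<le> L * \<bar>w t\<bar> + e"
  and L: "0 \<le> L" and e: "0 \<le> e"
  and w0: "w c = 0" and u0: "u c = 0" and x: "x \<in> {c..d}"
  shows "(w x)\<^sup>2 + (u x)\<^sup>2 \<le> e\<^sup>2 * (x - c) * exp ((2 + L) * (x - c))"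
proof -
  define E where "E t = (w t)\<^sup>2 + (u t)\<^sup>2" for t
  define E' where "E' t = 2 * w t * u t + 2 * u t * z t" for t
  have dE: "(E has_real_derivative E' t) (at t within {c..d})" if "t \<in> {c..d}" for t
    unfolding E_def E'_def using dw[OF that] du[OF that]
    by (auto intro!: derivative_eq_intros simp: algebra_simps)
  have leE: "E' t \<le> (2 + L) * E t + e\<^sup>2" if "t \<in> {c..d}" for t
  proof -
    have 1: "2 * w t * u t \<le> (w t)\<^sup>2 + (u t)\<^sup>2" by (rule two_ab_le)
    have "2 * u t * z t \<le> 2 * \<bar>u t\<bar> * \<bar>z t\<bar>" by (simp add: abs_mult[symmetric] mult.assoc)
    also have "\<dots> \<le> 2 * \<bar>u t\<bar> * (L * \<bar>w t\<bar> + e)"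
      using bd[OF that] by (intro mult_left_mono) auto
    also have "\<dots> = L * (2 * \<bar>u t\<bar> * \<bar>w t\<bar>) + 2 * \<bar>u t\<bar> * e" by (simp add: algebra_simps)
    also have "\<dots> \<le> L * ((u t)\<^sup>2 + (w t)\<^sup>2) + ((u t)\<^sup>2 + e\<^sup>2)"
    proof -
      have "2 * \<bar>u t\<bar> * \<bar>w t\<bar> \<le> \<bar>u t\<bar>\<^sup>2 + \<bar>w t\<bar>\<^sup>2" by (rule two_ab_le)
      then have "L * (2 * \<bar>u t\<bar> * \<bar>w t\<bar>) \<le> L * ((u t)\<^sup>2 + (w t)\<^sup>2)"
        using L by (intro mult_left_mono) auto
      moreover have "2 * \<bar>u t\<bar> * e \<le> \<bar>u t\<bar>\<^sup>2 + e\<^sup>2" by (rule two_ab_le)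
      ultimately show ?thesis by simp
    qed
    finally have 2: "2 * u t * z t \<le> L * ((u t)\<^sup>2 + (w t)\<^sup>2) + ((u t)\<^sup>2 + e\<^sup>2)" .
    have w2: "0 \<le> (w t)\<^sup>2" by simp
    have ex: "(2 + L) * ((w t)\<^sup>2 + (u t)\<^sup>2) = 2 * (w t)\<^sup>2 + 2 * (u t)\<^sup>2 + L * (u t)\<^sup>2 + L * (w t)\<^sup>2"
      by (simp add: algebra_simps)
    have ex2: "L * ((u t)\<^sup>2 + (w t)\<^sup>2) = L * (u t)\<^sup>2 + L * (w t)\<^sup>2" by (simp add: distrib_left)
    show ?thesis unfolding E'_def E_def ex using 1 2 w2 ex2 by linarith
  qed
  have "E x \<le> (E c + e\<^sup>2 * (x - c)) * exp ((2 + L) * (x - c))"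
    by (rule gronwall_fwd[OF dE leE]) (use L x in auto)
  then show ?thesis unfolding E_def using w0 u0 by simp
qed

lemma ode_unique:
  fixes w u z :: "real \<Rightarrow> real"
  assumes dw: "\<And>t. t \<in> {c..d} \<Longrightarrow> (w has_real_derivative u t) (at t within {c..d})"
  and du: "\<And>t. t \<in> {c..d} \<Longrightarrow> (u has_real_derivative z t) (at t within {c..d})"
  and bd: "\<And>t. t \<in> {c..d} \<Longrightarrow> \<bar>z t\<bar> \<le> L * \<bar>w t\<bar>"
  and L: "0 \<le> L"
  and w0: "w c = 0" and u0: "u c = 0" and x: "x \<in> {c..d}"
  shows "w x = 0 \<and> u x = 0"
proof -
  have "(w x)\<^sup>2 + (u x)\<^sup>2 \<le> 0\<^sup>2 * (x - c) * exp ((2 + L) * (x - c))"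
    by (rule ode_diff_bound[OF dw du _ L _ w0 u0 x]) (use bd in auto)
  then have "(w x)\<^sup>2 + (u x)\<^sup>2 \<le> 0" by simp
  moreover have "0 \<le> (w x)\<^sup>2" "0 \<le> (u x)\<^sup>2" by simp_all
  ultimately have "(w x)\<^sup>2 = 0" "(u x)\<^sup>2 = 0" by linarith+
  then show ?thesis by simp
qed

lemma ode_sol_bound:
  fixes y v p :: "real \<Rightarrow> real"
  assumes dy: "\<And>t. t \<in> {c..d} \<Longrightarrow> (y has_real_derivative v t) (at t within {c..d})"
  and dv: "\<And>t. t \<in> {c..d} \<Longrightarrow> (v has_real_derivative p t * y t) (at t within {c..d})"
  and bd: "\<And>t. t \<in> {c..d} \<Longrightarrow> \<bar>p t\<bar> \<le> K"
  and x: "x \<in> {c..d}"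
  shows "(y x)\<^sup>2 + (v x)\<^sup>2 \<le> ((y c)\<^sup>2 + (v c)\<^sup>2) * exp ((1 + K) * (x - c))"
proof -
  define E where "E t = (y t)\<^sup>2 + (v t)\<^sup>2" for t
  define E' where "E' t = 2 * y t * v t + 2 * v t * (p t * y t)" for t
  have K: "0 \<le> K" using bd[of x] x by auto
  have dE: "(E has_real_derivative E' t) (at t within {c..d})" if "t \<in> {c..d}" for t
    unfolding E_def E'_def using dy[OF that] dv[OF that]
    by (auto intro!: derivative_eq_intros simp: algebra_simps)
  have leE: "E' t \<le> (1 + K) * E t + 0" if "t \<in> {c..d}" for t
  proof -
    have 1: "2 * y t * v t \<le> (y t)\<^sup>2 + (v t)\<^sup>2" by (rule two_ab_le)
    have "2 * v t * (p t * y t) \<le> \<bar>p t\<bar> * (2 * \<bar>v t\<bar> * \<bar>y t\<bar>)"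
      by (simp add: abs_mult[symmetric] mult.assoc mult.left_commute)
    also have "\<dots> \<le> K * (2 * \<bar>v t\<bar> * \<bar>y t\<bar>)"
      using bd[OF that] by (intro mult_right_mono) auto
    also have "\<dots> \<le> K * (\<bar>v t\<bar>\<^sup>2 + \<bar>y t\<bar>\<^sup>2)" using K two_ab_le[of "\<bar>v t\<bar>" "\<bar>y t\<bar>"] by (intro mult_left_mono) auto
    finally show ?thesis using 1 unfolding E'_def E_def by (simp add: algebra_simps)
  qed
  have "E x \<le> (E c + 0 * (x - c)) * exp ((1 + K) * (x - c))"
    by (rule gronwall_fwd[OF dE leE]) (use K x in auto)
  then show ?thesis unfolding E_def by simp
qed

lemma ode_unique_bwd:
  fixes w u z :: "real \<Rightarrow> real"
  assumes dw: "\<And>t. t \<in> {c..d} \<Longrightarrow> (w has_real_derivative u t) (at t within {c..d})"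
  and du: "\<And>t. t \<in> {c..d} \<Longrightarrow> (u has_real_derivative z t) (at t within {c..d})"
  and bd: "\<And>t. t \<in> {c..d} \<Longrightarrow> \<bar>z t\<bar> \<le> L * \<bar>w t\<bar>"
  and L: "0 \<le> L"
  and w0: "w d = 0" and u0: "u d = 0" and x: "x \<in> {c..d}"
  shows "w x = 0 \<and> u x = 0"
proof -
  define E where "E t = (w t)\<^sup>2 + (u t)\<^sup>2" for t
  define E' where "E' t = 2 * w t * u t + 2 * u t * z t" for t
  define G where "G t = exp ((1 + L) * t) * E t" for t
  define G' where "G' t = exp ((1 + L) * t) * (E' t + (1 + L) * E t)" for t
  have dE: "(E has_real_derivative E' t) (at t within {c..d})" if "t \<in> {c..d}" for t
    unfolding E_def E'_def using dw[OF that] du[OF that]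
    by (auto intro!: derivative_eq_intros simp: algebra_simps)
  have dG: "(G has_real_derivative G' t) (at t within {x..d})" if "t \<in> {x..d}" for t
  proof -
    have "(E has_real_derivative E' t) (at t within {x..d})"
      using dE[of t] that x by (auto intro: DERIV_subset)
    then show ?thesis unfolding G_def G'_def
      by (auto intro!: derivative_eq_intros simp: algebra_simps)
  qed
  have geE: "0 \<le> E' t + (1 + L) * E t" if "t \<in> {c..d}" for t
  proof -
    have 1: "- 2 * w t * u t \<le> (w t)\<^sup>2 + (u t)\<^sup>2" using two_ab_le[of "- w t" "u t"] by simp
    have "- (2 * u t * z t) \<le> 2 * \<bar>u t\<bar> * \<bar>z t\<bar>" by (simp add: abs_mult[symmetric] mult.assoc)
    also have "\<dots> \<le> 2 * \<bar>u t\<bar> * (L * \<bar>w t\<bar>)"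
      using bd[OF that] by (intro mult_left_mono) auto
    also have "\<dots> = L * (2 * \<bar>u t\<bar> * \<bar>w t\<bar>)" by (simp add: algebra_simps)
    also have "\<dots> \<le> L * ((u t)\<^sup>2 + (w t)\<^sup>2)"
      using L two_ab_le[of "\<bar>u t\<bar>" "\<bar>w t\<bar>"] by (intro mult_left_mono) auto
    finally have 2: "- (2 * u t * z t) \<le> L * ((u t)\<^sup>2 + (w t)\<^sup>2)" .
    have ex: "(1 + L) * ((w t)\<^sup>2 + (u t)\<^sup>2) = (w t)\<^sup>2 + (u t)\<^sup>2 + L * ((u t)\<^sup>2 + (w t)\<^sup>2)"
      by (simp add: algebra_simps)
    show ?thesis unfolding E'_def E_def ex using 1 2 by linarith
  qed
  have "\<exists>t\<in>{x..d}. G d - G x = (\<lambda>h. G' t * h) (d - x)"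
    using x dG by (intro mvt_very_simple) (auto simp: has_field_derivative_def)
  then obtain t where t: "t \<in> {x..d}" "G d - G x = G' t * (d - x)" by auto
  have "0 \<le> G' t" unfolding G'_def using geE[of t] t x by auto
  then have "0 \<le> G' t * (d - x)" using t by auto
  then have "G x \<le> G d" using t(2) by linarith
  also have "G d = 0" unfolding G_def E_def using w0 u0 by simp
  finally have "E x \<le> 0" unfolding G_def by (simp add: mult_le_0_iff)
  moreover have "0 \<le> (w x)\<^sup>2" "0 \<le> (u x)\<^sup>2" by simp_all
  ultimately have "(w x)\<^sup>2 = 0" "(u x)\<^sup>2 = 0" unfolding E_def by linarith+
  then show ?thesis by simp
qed


lemma aux_fact: "(c ^ Suc (Suc k) / fact (Suc k)) * (d ^ Suc (Suc k) / real (Suc (Suc k))) = (c * d) ^ Suc (Suc k) / (fact (Suc (Suc k)) :: real)"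
proof -
  have f: "(fact (Suc (Suc k)) :: real) = real (Suc (Suc k)) * fact (Suc k)" by (simp only: fact_Suc[of "Suc k"] of_nat_mult)
  show ?thesis unfolding f power_mult_distrib by (simp add: divide_simps)
qed

fun pic :: "real \<Rightarrow> (real \<Rightarrow> real) \<Rightarrow> nat \<Rightarrow> (real \<Rightarrow> real) \<times> (real \<Rightarrow> real)" where
  "pic a p 0 = (\<lambda>x. 0, \<lambda>x. 1)"
| "pic a p (Suc k) = ((\<lambda>x. integral {a..x} (snd (pic a p k))),
                      (\<lambda>x. 1 + integral {a..x} (\<lambda>s. p s * fst (pic a p k) s)))"

lemma pic_cont:
  assumes p: "continuous_on UNIV p"
  shows "continuous_on {a..b} (fst (pic a p k)) \<and> continuous_on {a..b} (snd (pic a p k))"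
proof (induction k arbitrary: b)
  case 0
  then show ?case by (simp add: continuous_on_const)
next
  case (Suc k)
  have c1: "continuous_on {a..b} (snd (pic a p k))" using Suc by blast
  have c2: "continuous_on {a..b} (\<lambda>s. p s * fst (pic a p k) s)"
    using Suc p by (intro continuous_intros) (auto intro: continuous_on_subset)
  show ?case
    using indefinite_integral_continuous_1[OF integrable_continuous_real[OF c1]]
      indefinite_integral_continuous_1[OF integrable_continuous_real[OF c2]]
    by (auto intro!: continuous_intros)
qed

lemma int_power_shift:
  assumes "a \<le> x"
  shows "integral {a..x} (\<lambda>s. (s - a) ^ n) = (x - a) ^ Suc n / real (Suc n)"
proof -
  have "((\<lambda>s. (s - a) ^ n) has_integral ((x - a) ^ Suc n / real (Suc n) - (a - a) ^ Suc n / real (Suc n))) {a..x}"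
  proof (rule fundamental_theorem_of_calculus[OF assms])
    fix t assume "t \<in> {a..x}"
    have e: "real n * (t - a) ^ (n - Suc 0) * (t - a) = real n * (t - a) ^ n" by (cases n) auto
    show "((\<lambda>s. (s - a) ^ Suc n / real (Suc n)) has_vector_derivative (t - a) ^ n) (at t within {a..x})"
    proof -
      have d1: "((\<lambda>s. s - a) has_real_derivative 1) (at t within {a..x})"
        by (auto intro!: derivative_eq_intros)
      have "((\<lambda>s. (s - a) ^ Suc n / real (Suc n)) has_real_derivative
             ((1 + real n) * (1 * (t - a) ^ n)) / real (Suc n)) (at t within {a..x})"
        by (intro DERIV_cdivide DERIV_power_Suc d1)
      then have "((\<lambda>s. (s - a) ^ Suc n / real (Suc n)) has_real_derivative (t - a) ^ n) (at t within {a..x})"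
        by simp
      then show ?thesis by (simp add: has_real_derivative_iff_has_vector_derivative)
    qed
  qed
  then show ?thesis by (simp add: integral_unique)
qed

lemma pic_diff:
  assumes p: "continuous_on UNIV p" and bd: "\<And>t. a \<le> t \<Longrightarrow> \<bar>p t\<bar> \<le> K" and K: "0 \<le> K"
  shows "a \<le> x \<Longrightarrow> \<bar>fst (pic a p (Suc k)) x - fst (pic a p k) x\<bar> + \<bar>snd (pic a p (Suc k)) x - snd (pic a p k) x\<bar>
           \<le> ((1 + K) * (x - a)) ^ Suc k / fact (Suc k)"
proof (induction k arbitrary: x)
  case 0
  have "(x - a) * 1 \<le> (x - a) * (1 + K)" using 0 K by (intro mult_left_mono) auto
  then show ?case using 0 by (simp add: algebra_simps)
next
  case (Suc k)
  define yk where "yk = fst (pic a p k)"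
  define vk where "vk = snd (pic a p k)"
  define y1 where "y1 = fst (pic a p (Suc k))"
  define v1 where "v1 = snd (pic a p (Suc k))"
  define B where "B s = ((1 + K) * (s - a)) ^ Suc k / fact (Suc k)" for s
  have IH: "\<bar>y1 s - yk s\<bar> + \<bar>v1 s - vk s\<bar> \<le> B s" if "s \<in> {a..x}" for s
    using Suc.IH[of s] that unfolding yk_def vk_def y1_def v1_def B_def by auto
  have cyk: "continuous_on {a..x} yk" and cvk: "continuous_on {a..x} vk"
   and cy1: "continuous_on {a..x} y1" and cv1: "continuous_on {a..x} v1"
    using pic_cont[OF p, of a x] unfolding yk_def vk_def y1_def v1_def by blast+
  have cp: "continuous_on {a..x} p" using p by (rule continuous_on_subset) auto
  have e1: "fst (pic a p (Suc (Suc k))) x - y1 x = integral {a..x} (\<lambda>s. v1 s - vk s)"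
  proof -
    have a1: "fst (pic a p (Suc (Suc k))) x = integral {a..x} v1" unfolding v1_def by (simp only: pic.simps fst_conv)
    have a2: "y1 x = integral {a..x} vk" unfolding y1_def vk_def by (simp only: pic.simps fst_conv)
    show ?thesis unfolding a1 a2
      by (rule integral_diff[symmetric]) (auto intro!: integrable_continuous_real cv1 cvk)
  qed
  have e2: "snd (pic a p (Suc (Suc k))) x - v1 x = integral {a..x} (\<lambda>s. p s * (y1 s - yk s))"
  proof -
    have i1: "(\<lambda>s. p s * y1 s) integrable_on {a..x}"
      by (intro integrable_continuous_real continuous_intros cp cy1)
    have i2: "(\<lambda>s. p s * yk s) integrable_on {a..x}"
      by (intro integrable_continuous_real continuous_intros cp cyk)
    show ?thesis unfolding v1_def
      using integral_diff[OF i1 i2] unfolding y1_def yk_def by (simp add: algebra_simps)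
  qed
  have n1: "\<bar>integral {a..x} (\<lambda>s. v1 s - vk s)\<bar> \<le> integral {a..x} (\<lambda>s. \<bar>v1 s - vk s\<bar>)"
  proof -
    have "norm (integral {a..x} (\<lambda>s. v1 s - vk s)) \<le> integral {a..x} (\<lambda>s. \<bar>v1 s - vk s\<bar>)"
      by (rule integral_norm_bound_integral) (auto intro!: integrable_continuous_real continuous_intros cv1 cvk)
    then show ?thesis by simp
  qed
  have n2: "\<bar>integral {a..x} (\<lambda>s. p s * (y1 s - yk s))\<bar> \<le> integral {a..x} (\<lambda>s. K * \<bar>y1 s - yk s\<bar>)"
  proof -
    have "\<bar>p s * (y1 s - yk s)\<bar> \<le> K * \<bar>y1 s - yk s\<bar>" if "s \<in> {a..x}" for s
      using bd[of s] that by (auto simp: abs_mult intro!: mult_right_mono)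
    then have "norm (integral {a..x} (\<lambda>s. p s * (y1 s - yk s))) \<le> integral {a..x} (\<lambda>s. K * \<bar>y1 s - yk s\<bar>)"
      by (intro integral_norm_bound_integral) (auto intro!: integrable_continuous_real continuous_intros cp cy1 cyk)
    then show ?thesis by simp
  qed
  have i3: "integral {a..x} (\<lambda>s. \<bar>v1 s - vk s\<bar>) + integral {a..x} (\<lambda>s. K * \<bar>y1 s - yk s\<bar>)
        = integral {a..x} (\<lambda>s. \<bar>v1 s - vk s\<bar> + K * \<bar>y1 s - yk s\<bar>)"
    by (rule integral_add[symmetric]) (auto intro!: integrable_continuous_real continuous_intros cv1 cvk cy1 cyk)
  have i4: "integral {a..x} (\<lambda>s. \<bar>v1 s - vk s\<bar> + K * \<bar>y1 s - yk s\<bar>) \<le> integral {a..x} (\<lambda>s. (1 + K) * B s)"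
  proof (rule integral_le)
    show "(\<lambda>s. \<bar>v1 s - vk s\<bar> + K * \<bar>y1 s - yk s\<bar>) integrable_on {a..x}"
      by (auto intro!: integrable_continuous_real continuous_intros cv1 cvk cy1 cyk)
    show "(\<lambda>s. (1 + K) * B s) integrable_on {a..x}"
      unfolding B_def by (auto intro!: integrable_continuous_real continuous_intros)
    fix s assume s: "s \<in> {a..x}"
    have "\<bar>v1 s - vk s\<bar> + K * \<bar>y1 s - yk s\<bar> \<le> (1 + K) * (\<bar>y1 s - yk s\<bar> + \<bar>v1 s - vk s\<bar>)"
      using K by (simp add: algebra_simps)
    also have "\<dots> \<le> (1 + K) * B s" using IH[OF s] K by (intro mult_left_mono) auto
    finally show "\<bar>v1 s - vk s\<bar> + K * \<bar>y1 s - yk s\<bar> \<le> (1 + K) * B s" .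
  qed
  have i5: "integral {a..x} (\<lambda>s. (1 + K) * B s) = ((1 + K) * (x - a)) ^ Suc (Suc k) / fact (Suc (Suc k))"
  proof -
    have "(\<lambda>s. (1 + K) * B s) = (\<lambda>s. ((1 + K) ^ Suc (Suc k) / fact (Suc k)) * (s - a) ^ Suc k)"
      unfolding B_def by (auto simp: power_mult_distrib)
    then have "integral {a..x} (\<lambda>s. (1 + K) * B s) = ((1 + K) ^ Suc (Suc k) / fact (Suc k)) * ((x - a) ^ Suc (Suc k) / real (Suc (Suc k)))"
      using int_power_shift[OF Suc.prems, of "Suc k"] by simp
    also have "\<dots> = ((1 + K) * (x - a)) ^ Suc (Suc k) / fact (Suc (Suc k))"
      by (rule aux_fact)
    finally show ?thesis .
  qed
  have "\<bar>fst (pic a p (Suc (Suc k))) x - y1 x\<bar> + \<bar>snd (pic a p (Suc (Suc k))) x - v1 x\<bar>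
        \<le> ((1 + K) * (x - a)) ^ Suc (Suc k) / fact (Suc (Suc k))"
    unfolding e1 e2 using n1 n2 i3 i4 i5 by linarith
  then show ?case unfolding y1_def v1_def .
qed


lemma lin_ode_exists:
  fixes p :: "real \<Rightarrow> real"
  assumes p: "continuous_on UNIV p" and bd: "\<And>t. a \<le> t \<Longrightarrow> \<bar>p t\<bar> \<le> K"
  shows "\<exists>y v. y a = 0 \<and> v a = 1 \<and>
     (\<forall>b. \<forall>t\<in>{a..b}. (y has_real_derivative v t) (at t within {a..b}) \<and>
                      (v has_real_derivative p t * y t) (at t within {a..b}))"
proof -
  have K: "0 \<le> K" using bd[of a] by auto
  define dy where "dy i x = fst (pic a p (Suc i)) x - fst (pic a p i) x" for i x
  define dv where "dv i x = snd (pic a p (Suc i)) x - snd (pic a p i) x" for i x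
  define Y where "Y x = suminf (\<lambda>i. dy i x)" for x
  define V where "V x = 1 + suminf (\<lambda>i. dv i x)" for x
  have ul: "uniform_limit {a..b} (\<lambda>n. fst (pic a p n)) Y sequentially \<and>
            uniform_limit {a..b} (\<lambda>n. snd (pic a p n)) V sequentially" for b
  proof -
    define M where "M i = ((1 + K) * (b - a)) ^ Suc i / fact (Suc i)" for i
    have sM: "summable M"
    proof -
      have "summable (\<lambda>n. ((1 + K) * (b - a)) ^ n /\<^sub>R fact n)" by (rule summable_exp_generic)
      then have "summable (\<lambda>n. ((1 + K) * (b - a)) ^ n / fact n)" by (simp add: divide_inverse mult.commute)
      then show ?thesis unfolding M_def by (subst summable_Suc_iff)
    qed
    have bnd: "\<bar>dy i x\<bar> \<le> M i \<and> \<bar>dv i x\<bar> \<le> M i" if x: "x \<in> {a..b}" for i x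
    proof -
      have "\<bar>dy i x\<bar> + \<bar>dv i x\<bar> \<le> ((1 + K) * (x - a)) ^ Suc i / fact (Suc i)"
        unfolding dy_def dv_def using pic_diff[OF p bd K, where x=x and k=i] x by auto
      also have "\<dots> \<le> M i" unfolding M_def using x K
        by (intro divide_right_mono power_mono mult_left_mono) auto
      finally show ?thesis by auto
    qed
    have u1: "uniform_limit {a..b} (\<lambda>n x. \<Sum>i<n. dy i x) Y sequentially"
      unfolding Y_def by (rule Weierstrass_m_test[OF _ sM]) (use bnd in auto)
    have u2: "uniform_limit {a..b} (\<lambda>n x. \<Sum>i<n. dv i x) (\<lambda>x. suminf (\<lambda>i. dv i x)) sequentially"
      by (rule Weierstrass_m_test[OF _ sM]) (use bnd in auto)
    have t1: "(\<lambda>n x. \<Sum>i<n. dy i x) = (\<lambda>n. fst (pic a p n))"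
    proof (intro ext)
      fix n x
      have "(\<Sum>i<n. dy i x) = fst (pic a p n) x - fst (pic a p 0) x"
        unfolding dy_def by (rule sum_lessThan_telescope[of "\<lambda>i. fst (pic a p i) x"])
      then show "(\<Sum>i<n. dy i x) = fst (pic a p n) x" by simp
    qed
    have t2: "(\<lambda>n x. 1 + (\<Sum>i<n. dv i x)) = (\<lambda>n. snd (pic a p n))"
    proof (intro ext)
      fix n x
      have "(\<Sum>i<n. dv i x) = snd (pic a p n) x - snd (pic a p 0) x"
        unfolding dv_def by (rule sum_lessThan_telescope[of "\<lambda>i. snd (pic a p i) x"])
      then show "1 + (\<Sum>i<n. dv i x) = snd (pic a p n) x" by simp
    qed
    have u3: "uniform_limit {a..b} (\<lambda>n x. 1 + (\<Sum>i<n. dv i x)) V sequentially"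
      unfolding V_def by (intro uniform_limit_add uniform_limit_const u2)
    show ?thesis using u1 u3 unfolding t1 t2 by blast
  qed
  have cont: "continuous_on {a..b} Y \<and> continuous_on {a..b} V" for b
    using uniform_limit_theorem[OF _ conjunct1[OF ul[of b]]] uniform_limit_theorem[OF _ conjunct2[OF ul[of b]]]
      pic_cont[OF p] by (auto intro!: always_eventually)
  have inteq: "Y x = integral {a..x} V \<and> V x = 1 + integral {a..x} (\<lambda>s. p s * Y s)" if x: "a \<le> x" for x
  proof -
    have ulx: "uniform_limit {a..x} (\<lambda>n. fst (pic a p n)) Y sequentially \<and>
            uniform_limit {a..x} (\<lambda>n. snd (pic a p n)) V sequentially" by (rule ul)
    have cx: "continuous_on {a..x} (fst (pic a p n)) \<and> continuous_on {a..x} (snd (pic a p n))" for n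
      by (rule pic_cont[OF p])
    have cp: "continuous_on {a..x} p" using p by (rule continuous_on_subset) auto
    have L1: "(\<lambda>n. fst (pic a p n) x) \<longlonglongrightarrow> Y x" "(\<lambda>n. snd (pic a p n) x) \<longlonglongrightarrow> V x"
      using ulx x by (auto intro: tendsto_uniform_limitI)
    obtain I J where IJ: "\<And>n. (snd (pic a p n) has_integral I n) {a..x}" "(V has_integral J) {a..x}" "I \<longlonglongrightarrow> J"
      using uniform_limit_integral[OF conjunct2[OF ulx]] cx by auto
    have "I = (\<lambda>n. integral {a..x} (snd (pic a p n)))" using IJ(1) by (auto intro!: ext integral_unique[symmetric])
    then have "(\<lambda>n. fst (pic a p (Suc n)) x) \<longlonglongrightarrow> J"
      using IJ(3) by simp
    then have "(\<lambda>n. fst (pic a p n) x) \<longlonglongrightarrow> J" by (rule LIMSEQ_imp_Suc)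
    then have e1: "Y x = integral {a..x} V" using L1(1) IJ(2) by (metis LIMSEQ_unique integral_unique)
    have bY: "bounded (Y ` {a..x})" using cont[of x] by (intro compact_imp_bounded compact_continuous_image) auto
    have bp: "bounded (p ` {a..x})" using cp by (intro compact_imp_bounded compact_continuous_image) auto
    have ulp: "uniform_limit {a..x} (\<lambda>n s. p s * fst (pic a p n) s) (\<lambda>s. p s * Y s) sequentially"
      by (rule uniform_lim_mult[OF uniform_limit_const conjunct1[OF ulx] bp bY])
    obtain I2 J2 where IJ2: "\<And>n. ((\<lambda>s. p s * fst (pic a p n) s) has_integral I2 n) {a..x}"
        "((\<lambda>s. p s * Y s) has_integral J2) {a..x}" "I2 \<longlonglongrightarrow> J2"
      using uniform_limit_integral[OF ulp] cx cp by (auto intro!: continuous_intros)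
    have "I2 = (\<lambda>n. integral {a..x} (\<lambda>s. p s * fst (pic a p n) s))" using IJ2(1) by (auto intro!: ext integral_unique[symmetric])
    then have "(\<lambda>n. snd (pic a p (Suc n)) x) \<longlonglongrightarrow> 1 + J2"
      using IJ2(3) by (simp add: tendsto_add)
    then have "(\<lambda>n. snd (pic a p n) x) \<longlonglongrightarrow> 1 + J2" by (rule LIMSEQ_imp_Suc)
    then have e2: "V x = 1 + integral {a..x} (\<lambda>s. p s * Y s)" using L1(2) IJ2(2) by (metis LIMSEQ_unique integral_unique)
    show ?thesis using e1 e2 by blast
  qed
  have Y0: "Y a = 0" using inteq[of a] by simp
  have V0: "V a = 1" using inteq[of a] by simp
  have der: "(Y has_real_derivative V t) (at t within {a..b}) \<and> (V has_real_derivative p t * Y t) (at t within {a..b})"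
    if t: "t \<in> {a..b}" for b t
  proof -
    have cp: "continuous_on {a..b} p" using p by (rule continuous_on_subset) auto
    have d1: "((\<lambda>x. integral {a..x} V) has_real_derivative V t) (at t within {a..b})"
      by (rule integral_has_real_derivative[OF conjunct2[OF cont] t])
    have d2: "((\<lambda>x. 1 + integral {a..x} (\<lambda>s. p s * Y s)) has_real_derivative p t * Y t) (at t within {a..b})"
      using integral_has_real_derivative[of a b "\<lambda>s. p s * Y s", OF _ t] cp cont[of b]
      by (auto intro!: derivative_eq_intros continuous_intros)
    have "(Y has_real_derivative V t) (at t within {a..b})"
      by (rule has_field_derivative_transform_within[OF d1 zero_less_one t]) (use inteq in auto)
    moreover have "(V has_real_derivative p t * Y t) (at t within {a..b})"
      by (rule has_field_derivative_transform_within[OF d2 zero_less_one t]) (use inteq in auto)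
    ultimately show ?thesis by blast
  qed
  show ?thesis using Y0 V0 der by blast
qed


lemma stationary_regular:
  assumes D: "D > 0" and st: "stationary_solution D \<kappa> U"
  defines "I \<equiv> integral {0..1} (\<lambda>y. exp (U y))"
  shows "\<exists>U1. (\<forall>x. U (x + 1) = U x) \<and> (\<forall>x. (U has_real_derivative U1 x) (at x)) \<and>
             (\<forall>x. (U1 has_real_derivative (U x - \<kappa> * exp (U x) / I) / D) (at x))"
proof -
  obtain g where pw: "per_weak_dd U g" and ae: "AE x in lebesgue. D * g x - U x + \<kappa> * exp (U x) / I = 0"
    using st unfolding stationary_solution_def I_def by blast
  obtain f' where per: "\<forall>x. U (x + 1) = U x" and dU: "\<forall>x. (U has_vector_derivative f' x) (at x)"
    and gi: "\<forall>a b. a \<le> b \<longrightarrow> (g has_integral (f' b - f' a)) {a..b}"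
    using pw unfolding per_weak_dd_def by blast
  have dU': "(U has_real_derivative f' x) (at x)" for x
    using dU by (simp add: has_real_derivative_iff_has_vector_derivative)
  define h where "h x = (U x - \<kappa> * exp (U x) / I) / D" for x
  have cU: "continuous_on UNIV U"
    using dU' by (intro continuous_at_imp_continuous_on) (auto intro: DERIV_isCont)
  have hh: "h = (\<lambda>x. (U x - \<kappa> * exp (U x) * inverse I) * inverse D)"
    by (auto simp: h_def divide_inverse)
  have ch: "continuous_on S h" for S
    unfolding hh by (intro continuous_intros continuous_on_subset[OF cU]) auto
  have ae2: "AE x in lebesgue. g x = h x"
    using ae by eventually_elim (use D in \<open>auto simp: h_def field_simps\<close>)
  then obtain N where N: "{x \<in> space lebesgue. \<not> g x = h x} \<subseteq> N" "emeasure lebesgue N = 0" "N \<in> sets lebesgue"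
    by (rule AE_E)
  have negN: "negligible N" using N by (simp add: negligible_iff_null_sets null_setsI)
  have neg: "negligible {x. g x \<noteq> h x}" using N by (intro negligible_subset[OF negN]) auto
  have hi: "(h has_integral (f' b - f' a)) {a..b}" if "a \<le> b" for a b
    using gi that has_integral_spike_eq[OF neg, of "{a..b}" h g] by auto
  have dU1: "(f' has_real_derivative h x) (at x)" for x
  proof -
    have d1: "((\<lambda>y. f' (x - 1) + integral {x - 1..y} h) has_real_derivative h x) (at x within {x - 1..x + 1})"
      using integral_has_real_derivative[OF ch, of x "x - 1" "x + 1"] by (auto intro!: derivative_eq_intros)
    have "(f' has_real_derivative h x) (at x within {x - 1..x + 1})"
    proof (rule has_field_derivative_transform_within[OF d1 zero_less_one])
      show "x \<in> {x - 1..x + 1}" by auto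
      fix y assume "y \<in> {x - 1..x + 1}"
      then show "f' (x - 1) + integral {x - 1..y} h = f' y" using hi[of "x - 1" y] by (auto dest: integral_unique)
    qed
    then show ?thesis by (simp add: at_within_Icc_at)
  qed
  show ?thesis using per dU' dU1 unfolding h_def by blast
qed


lemma exp_lip:
  fixes u v M :: real
  assumes "u \<le> M" "v \<le> M"
  shows "\<bar>exp u - exp v\<bar> \<le> exp M * \<bar>u - v\<bar>"
proof -
  have *: "exp b - exp a \<le> exp M * (b - a)" if "a < b" "b \<le> M" for a b :: real
  proof -
    obtain z where z: "a < z" "z < b" "exp b - exp a = (b - a) * exp z"
      using MVT2[OF \<open>a < b\<close>, of exp exp] by (auto intro: DERIV_exp)
    have "exp z \<le> exp M" using z that by simp
    then show ?thesis using z that by (simp add: mult.commute mult_left_mono)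
  qed
  show ?thesis
  proof (cases u v rule: linorder_cases)
    case less then show ?thesis using *[of u v] assms by (simp add: abs_if)
  next
    case equal then show ?thesis by simp
  next
    case greater then show ?thesis using *[of v u] assms by (simp add: abs_if)
  qed
qed

lemma periodic_nat: assumes "\<And>x. f (x + 1) = (f x :: real)" shows "f (x + real n) = f x"
proof (induction n)
  case (Suc n)
  then show ?case using assms[of "x + real n"] by (simp add: algebra_simps)
qed simp

lemma periodic_int: assumes "\<And>x. f (x + 1) = (f x :: real)" shows "f (x + real_of_int n) = f x"
proof (cases "n \<ge> 0")
  case True
  then show ?thesis using periodic_nat[of f, OF assms, of x "nat n"] by simp
next
  case False
  have "f (x + real_of_int n + real (nat (- n))) = f (x + real_of_int n)" by (rule periodic_nat[of f, OF assms])
  then show ?thesis using False by simp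
qed

locale stat =
  fixes D \<kappa> I :: real and U U1 :: "real \<Rightarrow> real"
  assumes D: "0 < D"
    and per: "\<And>x. U (x + 1) = U x"
    and dU: "\<And>x. (U has_real_derivative U1 x) (at x)"
    and dU1: "\<And>x. (U1 has_real_derivative (U x - \<kappa> * exp (U x) / I) / D) (at x)"
begin

definition F where "F u = (u - \<kappa> * exp u / I) / D"
definition r where "r x = (1 - \<kappa> * exp (U x) / I) / D"

lemma dU1F: "(U1 has_real_derivative F (U x)) (at x)"
  using dU1 unfolding F_def .

lemma cU: "continuous_on S U"
  using dU by (intro continuous_at_imp_continuous_on) (auto intro: DERIV_isCont)

lemma cU1: "continuous_on S U1"
  using dU1 by (intro continuous_at_imp_continuous_on) (auto intro: DERIV_isCont)

lemma cr: "continuous_on S r"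
proof -
  have "r = (\<lambda>x. (1 - \<kappa> * exp (U x) * inverse I) * inverse D)" by (auto simp: r_def divide_inverse)
  then show ?thesis by (auto intro!: continuous_intros cU)
qed

lemma F_alt: "F u = (u - (\<kappa> / I) * exp u) * inverse D"
  unfolding F_def by (simp add: divide_inverse)

lemma dF: "(F has_real_derivative (1 - \<kappa> * exp u / I) / D) (at u)"
proof -
  obtain c where c: "c = \<kappa> / I" by blast
  have "((\<lambda>u. (u - c * exp u) * inverse D) has_real_derivative (1 - c * exp u) * inverse D) (at u)"
    by (auto intro!: derivative_eq_intros)
  then have "((\<lambda>u. (u - (\<kappa> / I) * exp u) * inverse D) has_real_derivative (1 - (\<kappa> / I) * exp u) * inverse D) (at u)"
    using c by simp
  moreover have "F = (\<lambda>u. (u - (\<kappa> / I) * exp u) * inverse D)" using F_alt by auto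
  moreover have "(1 - (\<kappa> / I) * exp u) * inverse D = (1 - \<kappa> * exp u / I) / D"
    by (simp add: divide_inverse ac_simps)
  ultimately show ?thesis by simp
qed

lemma dU2: "((\<lambda>x. F (U x)) has_real_derivative r x * U1 x) (at x)"
  using DERIV_chain2[OF dF dU] unfolding r_def by simp

lemma per_int: "U (x + real_of_int n) = U x"
  by (rule periodic_int[of U, OF per])

definition MU where "MU = (SOME M. \<forall>x. \<bar>U x\<bar> \<le> M)"

lemma U_bdd: "\<bar>U x\<bar> \<le> MU"
proof -
  have "bounded (U ` {0..1})" using cU by (intro compact_imp_bounded compact_continuous_image) auto
  then obtain B where B: "\<forall>y\<in>{0..1}. \<bar>U y\<bar> \<le> B" by (auto simp: bounded_iff)
  have "\<bar>U x\<bar> \<le> B" for x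
  proof -
    have "U x = U (frac x + real_of_int \<lfloor>x\<rfloor>)" by (simp add: frac_def)
    also have "\<dots> = U (frac x)" by (rule per_int)
    finally show ?thesis using B frac_ge_0[of x] frac_lt_1[of x] by auto
  qed
  then have "\<exists>M. \<forall>x. \<bar>U x\<bar> \<le> M" by blast
  then show ?thesis unfolding MU_def by (rule someI_ex[where P="\<lambda>M. \<forall>x. \<bar>U x\<bar> \<le> M", THEN spec])
qed

definition LF where "LF = (1 + \<bar>\<kappa> / I\<bar> * exp MU) / D"

lemma LF_nonneg: "0 \<le> LF" unfolding LF_def using D by auto

lemma F_lip:
  assumes "\<bar>u\<bar> \<le> MU" "\<bar>v\<bar> \<le> MU"
  shows "\<bar>F u - F v\<bar> \<le> LF * \<bar>u - v\<bar>"
proof -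
  have "F u - F v = ((u - v) - (\<kappa> / I) * (exp u - exp v)) / D" unfolding F_alt by (simp add: divide_inverse algebra_simps)
  then have "\<bar>F u - F v\<bar> = \<bar>(u - v) - (\<kappa> / I) * (exp u - exp v)\<bar> / D" using D by simp
  also have "\<dots> \<le> (\<bar>u - v\<bar> + \<bar>\<kappa> / I\<bar> * \<bar>exp u - exp v\<bar>) / D"
    using D by (intro divide_right_mono) (auto simp: abs_mult[symmetric] intro: abs_triangle_ineq4[THEN order_trans])
  also have "\<dots> \<le> (\<bar>u - v\<bar> + \<bar>\<kappa> / I\<bar> * (exp MU * \<bar>u - v\<bar>)) / D"
    using D assms exp_lip[of u MU v] by (intro divide_right_mono add_left_mono mult_left_mono) auto
  also have "\<dots> = LF * \<bar>u - v\<bar>" unfolding LF_def by (simp add: algebra_simps)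
  finally show ?thesis .
qed

lemma r_bdd: "\<bar>r x\<bar> \<le> LF"
proof -
  have "\<bar>r x\<bar> = \<bar>1 - (\<kappa> / I) * exp (U x)\<bar> / D" unfolding r_def using D by simp
  also have "\<dots> \<le> (1 + \<bar>\<kappa> / I\<bar> * exp MU) / D"
  proof (intro divide_right_mono)
    have "exp (U x) \<le> exp MU" using U_bdd[of x] by auto
    then have "\<bar>\<kappa> / I\<bar> * exp (U x) \<le> \<bar>\<kappa> / I\<bar> * exp MU" by (intro mult_left_mono) auto
    then show "\<bar>1 - (\<kappa> / I) * exp (U x)\<bar> \<le> 1 + \<bar>\<kappa> / I\<bar> * exp MU"
    proof -
      have "\<bar>1 - (\<kappa> / I) * exp (U x)\<bar> \<le> \<bar>1\<bar> + \<bar>(\<kappa> / I) * exp (U x)\<bar>" by (rule abs_triangle_ineq4)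
      also have "\<bar>(\<kappa> / I) * exp (U x)\<bar> = \<bar>\<kappa> / I\<bar> * exp (U x)" by (simp add: abs_mult)
      finally show ?thesis using \<open>\<bar>\<kappa> / I\<bar> * exp (U x) \<le> \<bar>\<kappa> / I\<bar> * exp MU\<close> by simp
    qed
  qed (use D in auto)
  finally show ?thesis unfolding LF_def .
qed

lemma per1: "U1 (x + 1) = U1 x"
proof -
  have "((\<lambda>x. U (x + 1)) has_real_derivative U1 (x + 1) * 1) (at x)"
    by (rule DERIV_chain2[OF dU]) (auto intro!: derivative_eq_intros)
  moreover have "(\<lambda>x. U (x + 1)) = U" using per by auto
  ultimately show ?thesis using dU[of x] DERIV_unique by fastforce
qed

lemma dU_refl: "((\<lambda>t. U (c - t)) has_real_derivative - U1 (c - t)) (at t)"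
proof -
  have "((\<lambda>t. U (c - t)) has_real_derivative U1 (c - t) * (-1)) (at t)"
    by (rule DERIV_chain2[OF dU]) (auto intro!: derivative_eq_intros)
  then show ?thesis by simp
qed

lemma dU1_refl: "((\<lambda>t. U1 (c - t)) has_real_derivative - F (U (c - t))) (at t)"
proof -
  have "((\<lambda>t. U1 (c - t)) has_real_derivative F (U (c - t)) * (-1)) (at t)"
    by (rule DERIV_chain2[OF dU1F]) (auto intro!: derivative_eq_intros)
  then show ?thesis by simp
qed

lemma even_about:
  assumes a: "U1 a = 0" shows "U (2 * a - x) = U x"
proof -
  have main: "U x - U (2 * a - x) = 0" if x: "a \<le> x" for x
  proof -
    define w where "w t = U t - U (2 * a - t)" for t
    define u where "u t = U1 t + U1 (2 * a - t)" for t
    define z where "z t = F (U t) - F (U (2 * a - t))" for t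
    have dw: "(w has_real_derivative u t) (at t within {a..x})" for t
    proof -
      have "(w has_real_derivative u t) (at t)"
        unfolding w_def u_def using DERIV_diff[OF dU dU_refl[of "2 * a"]] by simp
      then show ?thesis by (rule has_field_derivative_at_within)
    qed
    have du: "(u has_real_derivative z t) (at t within {a..x})" for t
    proof -
      have "(u has_real_derivative z t) (at t)"
        unfolding u_def z_def using DERIV_add[OF dU1F dU1_refl[of "2 * a"]] by simp
      then show ?thesis by (rule has_field_derivative_at_within)
    qed
    have bd: "\<bar>z t\<bar> \<le> LF * \<bar>w t\<bar>" for t
      unfolding z_def w_def by (rule F_lip[OF U_bdd U_bdd])
    have "w x = 0 \<and> u x = 0"
      by (rule ode_unique[OF dw du bd LF_nonneg]) (use x a in \<open>auto simp: w_def u_def\<close>)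
    then show ?thesis unfolding w_def by simp
  qed
  show ?thesis
  proof (cases "a \<le> x")
    case True then show ?thesis using main[of x] by simp
  next
    case False then show ?thesis using main[of "2 * a - x"] by simp
  qed
qed

lemma odd_deriv:
  assumes "\<And>x. U (c - x) = U x" shows "U1 (c - x) = - U1 x"
proof -
  have "(\<lambda>t. U (c - t)) = U" using assms by auto
  then have "(U has_real_derivative - U1 (c - x)) (at x)" using dU_refl[of c x] by simp
  then show ?thesis using DERIV_unique[OF dU[of x]] by simp
qed

lemma const_of_equil:
  assumes a: "U1 a = 0" and Fa: "F (U a) = 0" shows "U x = U a"
proof -
  have main: "U x = U a" if x: "a \<le> x" for x
  proof -
    define w where "w t = U t - U a" for t
    have dw: "(w has_real_derivative U1 t) (at t within {a..x})" for t
    proof -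
      have "(w has_real_derivative U1 t - 0) (at t)"
        unfolding w_def by (intro DERIV_diff dU DERIV_const)
      then show ?thesis by (simp add: has_field_derivative_at_within)
    qed
    have du: "(U1 has_real_derivative F (U t)) (at t within {a..x})" for t
      using dU1F by (rule has_field_derivative_at_within)
    have bd: "\<bar>F (U t)\<bar> \<le> LF * \<bar>w t\<bar>" for t
      using F_lip[OF U_bdd U_bdd, of t a] Fa unfolding w_def by simp
    have "w x = 0 \<and> U1 x = 0"
      by (rule ode_unique[OF dw du bd LF_nonneg]) (use x a in \<open>auto simp: w_def\<close>)
    then show ?thesis unfolding w_def by simp
  qed
  have "U x = U (x + real_of_int \<lceil>a - x\<rceil>)" by (rule per_int[symmetric])
  also have "\<dots> = U a" by (rule main) linarith
  finally show ?thesis .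
qed

end


lemma mono_from_deriv:
  fixes f f' :: "real \<Rightarrow> real"
  assumes der: "\<And>t. t \<in> {c..d} \<Longrightarrow> (f has_real_derivative f' t) (at t within {c..d})"
  and nn: "\<And>t. t \<in> {c..d} \<Longrightarrow> 0 \<le> f' t"
  and x: "x \<in> {c..d}"
  shows "f c \<le> f x"
proof -
  have d2: "(f has_real_derivative f' t) (at t within {c..x})" if "t \<in> {c..x}" for t
    using der[of t] that x by (auto intro: DERIV_subset)
  have "\<exists>t\<in>{c..x}. f x - f c = (\<lambda>h. f' t * h) (x - c)"
    using x d2 by (intro mvt_very_simple) (auto simp: has_field_derivative_def)
  then obtain t where t: "t \<in> {c..x}" "f x - f c = f' t * (x - c)" by auto
  have "0 \<le> f' t * (x - c)" using nn[of t] t x by auto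
  then show ?thesis using t by linarith
qed

locale shoot = stat +
  fixes a c :: real
  assumes Ua: "U1 a = 0" and nu: "F (U a) \<noteq> 0"
    and ac: "a < c" and cb: "c < a + 1/2" and Uc: "U1 c = 0"
begin

definition issol :: "real \<Rightarrow> (real \<Rightarrow> real) \<Rightarrow> (real \<Rightarrow> real) \<Rightarrow> bool" where
  "issol l y v \<longleftrightarrow> y a = 0 \<and> v a = 1 \<and>
     (\<forall>d. \<forall>t\<in>{a..d}. (y has_real_derivative v t) (at t within {a..d}) \<and>
                      (v has_real_derivative (l + r t) * y t) (at t within {a..d}))"

lemma sol_ex: "\<exists>yv. issol l (fst yv) (snd yv)"
proof -
  have "continuous_on UNIV (\<lambda>t. l + r t)" by (intro continuous_intros cr)
  moreover have "\<bar>l + r t\<bar> \<le> \<bar>l\<bar> + LF" for t using r_bdd[of t] by linarith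
  ultimately obtain y v where "y a = 0 \<and> v a = 1 \<and>
     (\<forall>b. \<forall>t\<in>{a..b}. (y has_real_derivative v t) (at t within {a..b}) \<and>
                      (v has_real_derivative (l + r t) * y t) (at t within {a..b}))"
    using lin_ode_exists[of "\<lambda>t. l + r t" a "\<bar>l\<bar> + LF"] by blast
  then have "issol l (fst (y, v)) (snd (y, v))" unfolding issol_def by simp
  then show ?thesis by blast
qed

definition ys where "ys l = fst (SOME yv. issol l (fst yv) (snd yv))"
definition vs where "vs l = snd (SOME yv. issol l (fst yv) (snd yv))"

lemma issol: "issol l (ys l) (vs l)"
  unfolding ys_def vs_def by (rule someI_ex[OF sol_ex])

lemma ys0: "ys l a = 0" and vs0: "vs l a = 1"
  using issol[of l] unfolding issol_def by auto

lemma dys: "t \<in> {a..d} \<Longrightarrow> (ys l has_real_derivative vs l t) (at t within {a..d})"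
  and dvs: "t \<in> {a..d} \<Longrightarrow> (vs l has_real_derivative (l + r t) * ys l t) (at t within {a..d})"
  using issol[of l] unfolding issol_def by auto

lemma dys_at: "a < t \<Longrightarrow> (ys l has_real_derivative vs l t) (at t)"
  using dys[of t "t + 1" l] by (simp add: at_within_Icc_at)

lemma dvs_at: "a < t \<Longrightarrow> (vs l has_real_derivative (l + r t) * ys l t) (at t)"
  using dvs[of t "t + 1" l] by (simp add: at_within_Icc_at)

lemma cys: "continuous_on {a..d} (ys l)"
  using dys by (intro DERIV_continuous_on) auto

lemma cvs: "continuous_on {a..d} (vs l)"
  using dvs by (intro DERIV_continuous_on) auto

definition \<nu> where "\<nu> = F (U a)"

lemma ys_zero: "a \<le> x \<Longrightarrow> ys 0 x = U1 x / \<nu>"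
proof -
  assume x: "a \<le> x"
  define w where "w t = ys 0 t - U1 t / \<nu>" for t
  define u where "u t = vs 0 t - F (U t) / \<nu>" for t
  define z where "z t = r t * w t" for t
  have dw: "(w has_real_derivative u t) (at t within {a..x})" if "t \<in> {a..x}" for t
  proof -
    have "((\<lambda>t. U1 t / \<nu>) has_real_derivative F (U t) / \<nu>) (at t within {a..x})"
      using DERIV_cdivide[OF dU1F] by (rule has_field_derivative_at_within)
    then show ?thesis unfolding w_def u_def by (rule DERIV_diff[OF dys[OF that]])
  qed
  have du: "(u has_real_derivative z t) (at t within {a..x})" if "t \<in> {a..x}" for t
  proof -
    have "((\<lambda>t. F (U t) / \<nu>) has_real_derivative r t * U1 t / \<nu>) (at t within {a..x})"
      using DERIV_cdivide[OF dU2] by (rule has_field_derivative_at_within)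
    then have "(u has_real_derivative (0 + r t) * ys 0 t - r t * U1 t / \<nu>) (at t within {a..x})"
      unfolding u_def by (rule DERIV_diff[OF dvs[OF that]])
    then show ?thesis unfolding z_def w_def by (simp add: algebra_simps)
  qed
  have bd: "\<bar>z t\<bar> \<le> LF * \<bar>w t\<bar>" for t
    unfolding z_def abs_mult using r_bdd[of t] by (simp add: mult_right_mono)
  have "w x = 0 \<and> u x = 0"
    by (rule ode_unique[OF dw du bd LF_nonneg]) (use x nu in \<open>auto simp: w_def u_def ys0 vs0 Ua \<nu>_def\<close>)
  then show ?thesis unfolding w_def by simp
qed

lemma ys0_c: "ys 0 c = 0"
  using ys_zero[of c] ac Uc by simp

definition Lam where "Lam = LF + 1"

lemma Lam_pos: "0 < Lam" unfolding Lam_def using LF_nonneg by simp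

lemma ys_Lam_nonzero: "a < x \<Longrightarrow> ys Lam x \<noteq> 0"
proof
  assume x: "a < x" and y0: "ys Lam x = 0"
  define y where "y = ys Lam"
  define v where "v = vs Lam"
  have pp: "0 \<le> Lam + r t" for t using r_bdd[of t] unfolding Lam_def by linarith
  have dy: "(y has_real_derivative v t) (at t within {a..x})" if "t \<in> {a..x}" for t
    unfolding y_def v_def using dys[OF that] .
  have dv: "(v has_real_derivative (Lam + r t) * y t) (at t within {a..x})" if "t \<in> {a..x}" for t
    unfolding y_def v_def using dvs[OF that] .
  have m: "0 \<le> y t * v t" if t: "t \<in> {a..x}" for t
  proof -
    have "y a * v a \<le> y t * v t"
    proof (rule mono_from_deriv[OF _ _ t])
      fix s assume s: "s \<in> {a..x}"
      show "((\<lambda>t. y t * v t) has_real_derivative v s * v s + y s * ((Lam + r s) * y s)) (at s within {a..x})"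
        using dy[OF s] dv[OF s] by (auto intro!: derivative_eq_intros)
      have "0 \<le> (Lam + r s) * (y s * y s)" using pp by simp
      then show "0 \<le> v s * v s + y s * ((Lam + r s) * y s)" by (simp add: algebra_simps)
    qed
    then show ?thesis unfolding y_def v_def by (simp add: ys0)
  qed
  have v2: "1 \<le> v t * v t" if t: "t \<in> {a..x}" for t
  proof -
    have "v a * v a \<le> v t * v t"
    proof (rule mono_from_deriv[OF _ _ t])
      fix s assume s: "s \<in> {a..x}"
      show "((\<lambda>t. v t * v t) has_real_derivative 2 * (Lam + r s) * (y s * v s)) (at s within {a..x})"
        using dv[OF s] by (auto intro!: derivative_eq_intros simp: algebra_simps)
      show "0 \<le> 2 * (Lam + r s) * (y s * v s)" using pp[of s] m[OF s] by simp
    qed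
    then show ?thesis unfolding v_def by (simp add: vs0)
  qed
  have "\<exists>t\<in>{a<..<x}. y x - y a = (\<lambda>h. v t * h) (x - a)"
    using x dy by (intro mvt_simple) (auto simp: has_field_derivative_def)
  then obtain t where t: "t \<in> {a<..<x}" "y x - y a = v t * (x - a)" by auto
  then have "v t = 0" using y0 x unfolding y_def by (simp add: ys0)
  then show False using v2[of t] t by simp
qed

end


lemma abs_le_1_sq: "\<bar>y\<bar> \<le> 1 + (y::real)\<^sup>2"
proof (cases "\<bar>y\<bar> \<le> 1")
  case True
  have "0 \<le> y\<^sup>2" by simp
  then show ?thesis using True by linarith
next
  case False
  then have "\<bar>y\<bar> * 1 \<le> \<bar>y\<bar> * \<bar>y\<bar>" by (intro mult_left_mono) auto
  then show ?thesis by (simp add: power2_eq_square)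
qed

context shoot begin

definition K0 where "K0 = Lam + LF"
definition Eb where "Eb = exp ((1 + K0) * (1/2))"
definition C2 where "C2 = (1/2) * exp ((2 + K0) * (1/2))"
definition Cc where "Cc = (1 + Eb) * (1 + C2)"

lemma K0_nonneg: "0 \<le> K0" unfolding K0_def using Lam_pos LF_nonneg by simp

lemma p_bdd: "l \<in> {0..Lam} \<Longrightarrow> \<bar>l + r t\<bar> \<le> K0"
  using r_bdd[of t] unfolding K0_def by auto

lemma sol_bound:
  assumes l: "l \<in> {0..Lam}" and x: "x \<in> {a..a + 1/2}"
  shows "(ys l x)\<^sup>2 + (vs l x)\<^sup>2 \<le> Eb"
proof -
  have "(ys l x)\<^sup>2 + (vs l x)\<^sup>2 \<le> ((ys l a)\<^sup>2 + (vs l a)\<^sup>2) * exp ((1 + K0) * (x - a))"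
    by (rule ode_sol_bound[OF dys dvs p_bdd[OF l] x])
  also have "\<dots> = exp ((1 + K0) * (x - a))" by (simp add: ys0 vs0)
  also have "\<dots> \<le> Eb" unfolding Eb_def using x K0_nonneg by (intro exp_mono mult_left_mono) auto
  finally show ?thesis .
qed

lemma ys_bound:
  assumes l: "l \<in> {0..Lam}" and x: "x \<in> {a..a + 1/2}"
  shows "\<bar>ys l x\<bar> \<le> 1 + Eb"
proof -
  have "(ys l x)\<^sup>2 \<le> Eb" using sol_bound[OF l x] zero_le_power2[of "vs l x"] by linarith
  then show ?thesis using abs_le_1_sq[of "ys l x"] by linarith
qed

lemma lip:
  assumes l: "l \<in> {0..Lam}" and l': "l' \<in> {0..Lam}" and x: "x \<in> {a..a + 1/2}"
  shows "\<bar>ys l x - ys l' x\<bar> \<le> Cc * \<bar>l - l'\<bar> \<and> \<bar>vs l x - vs l' x\<bar> \<le> Cc * \<bar>l - l'\<bar>"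
proof -
  define w where "w t = ys l t - ys l' t" for t
  define u where "u t = vs l t - vs l' t" for t
  define z where "z t = (l + r t) * ys l t - (l' + r t) * ys l' t" for t
  define e where "e = \<bar>l - l'\<bar> * (1 + Eb)"
  have dw: "(w has_real_derivative u t) (at t within {a..a + 1/2})" if "t \<in> {a..a + 1/2}" for t
    unfolding w_def u_def by (rule DERIV_diff[OF dys[OF that] dys[OF that]])
  have du: "(u has_real_derivative z t) (at t within {a..a + 1/2})" if "t \<in> {a..a + 1/2}" for t
    unfolding u_def z_def by (rule DERIV_diff[OF dvs[OF that] dvs[OF that]])
  have bd: "\<bar>z t\<bar> \<le> K0 * \<bar>w t\<bar> + e" if t: "t \<in> {a..a + 1/2}" for t
  proof -
    have "z t = (l + r t) * w t + (l - l') * ys l' t" unfolding z_def w_def by (simp add: algebra_simps)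
    then have "\<bar>z t\<bar> \<le> \<bar>l + r t\<bar> * \<bar>w t\<bar> + \<bar>l - l'\<bar> * \<bar>ys l' t\<bar>"
      by (simp add: abs_mult[symmetric] abs_triangle_ineq)
    also have "\<dots> \<le> K0 * \<bar>w t\<bar> + \<bar>l - l'\<bar> * (1 + Eb)"
      using p_bdd[OF l, of t] ys_bound[OF l' t]
      by (intro add_mono mult_right_mono mult_left_mono) auto
    finally show ?thesis unfolding e_def .
  qed
  have e0: "0 \<le> e" unfolding e_def Eb_def by simp
  have "(w x)\<^sup>2 + (u x)\<^sup>2 \<le> e\<^sup>2 * (x - a) * exp ((2 + K0) * (x - a))"
    by (rule ode_diff_bound[OF dw du bd K0_nonneg e0]) (use x in \<open>auto simp: w_def u_def ys0 vs0\<close>)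
  also have "\<dots> \<le> e\<^sup>2 * C2" unfolding C2_def mult.assoc using x K0_nonneg
    by (intro mult_left_mono mult_mono exp_mono) auto
  also have "\<dots> \<le> e\<^sup>2 * (1 + C2)\<^sup>2"
  proof -
    have "0 \<le> C2" unfolding C2_def by simp
    then have "C2 \<le> (1 + C2)\<^sup>2" by (simp add: power2_eq_square algebra_simps)
    then show ?thesis by (intro mult_left_mono) auto
  qed
  also have "\<dots> = (Cc * \<bar>l - l'\<bar>)\<^sup>2" unfolding Cc_def e_def by (simp add: power_mult_distrib)
  finally have *: "(w x)\<^sup>2 + (u x)\<^sup>2 \<le> (Cc * \<bar>l - l'\<bar>)\<^sup>2" .
  have Cc0: "0 \<le> Cc * \<bar>l - l'\<bar>" unfolding Cc_def C2_def Eb_def by simp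
  have "(w x)\<^sup>2 \<le> (Cc * \<bar>l - l'\<bar>)\<^sup>2" using * zero_le_power2[of "u x"] by linarith
  then have "\<bar>w x\<bar>\<^sup>2 \<le> (Cc * \<bar>l - l'\<bar>)\<^sup>2" by simp
  then have "\<bar>w x\<bar> \<le> Cc * \<bar>l - l'\<bar>" by (rule power2_le_imp_le[OF _ Cc0])
  moreover have "(u x)\<^sup>2 \<le> (Cc * \<bar>l - l'\<bar>)\<^sup>2" using * zero_le_power2[of "w x"] by linarith
  then have "\<bar>u x\<bar>\<^sup>2 \<le> (Cc * \<bar>l - l'\<bar>)\<^sup>2" by simp
  then have "\<bar>u x\<bar> \<le> Cc * \<bar>l - l'\<bar>" by (rule power2_le_imp_le[OF _ Cc0])
  ultimately show ?thesis unfolding w_def u_def by blast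
qed

end


lemma ivt_prod:
  fixes f :: "real \<Rightarrow> real"
  assumes "x1 \<le> x2" "continuous_on {x1..x2} f" "f x1 * f x2 < 0"
  shows "\<exists>x\<in>{x1..x2}. f x = 0"
proof (cases "f x1 < 0")
  case True
  then have "0 < f x2" using assms(3) by (auto simp: mult_less_0_iff)
  then show ?thesis using IVT'[of f x1 0 x2] assms True by force
next
  case False
  then have "f x1 > 0" using assms(3) by (cases "f x1 = 0") auto
  then have "f x2 < 0" using assms(3) by (auto simp: mult_less_0_iff)
  then show ?thesis using IVT2'[of f x2 0 x1] assms \<open>f x1 > 0\<close> by force
qed

lemma same_sign: "\<bar>A - B\<bar> < \<bar>B\<bar> \<Longrightarrow> 0 < A * (B::real)"
  by (smt (verit) mult_neg_neg mult_pos_pos)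

context shoot begin

lemma simple_zero:
  assumes x0: "a < x0" and z: "ys l x0 = 0" shows "vs l x0 \<noteq> 0"
proof
  assume v: "vs l x0 = 0"
  have bd: "\<bar>(l + r t) * ys l t\<bar> \<le> (\<bar>l\<bar> + LF) * \<bar>ys l t\<bar>" for t
    unfolding abs_mult using r_bdd[of t] by (intro mult_right_mono) auto
  have "ys l a = 0 \<and> vs l a = 0"
    by (rule ode_unique_bwd[OF dys dvs bd _ z v]) (use x0 LF_nonneg in auto)
  then show False using vs0 by simp
qed

definition S where "S = {l \<in> {0..Lam}. \<exists>x\<in>{a<..<a + 1/2}. ys l x = 0}"

lemma S_open:
  assumes l0: "l0 \<in> S" shows "\<exists>\<delta>>0. \<forall>l\<in>{0..Lam}. \<bar>l - l0\<bar> < \<delta> \<longrightarrow> l \<in> S"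
proof -
  obtain x0 where x0: "x0 \<in> {a<..<a + 1/2}" "ys l0 x0 = 0" and l0r: "l0 \<in> {0..Lam}" using l0 unfolding S_def by auto
  have v0: "vs l0 x0 \<noteq> 0" using simple_zero[of x0 l0] x0 by auto
  have dy: "(ys l0 has_real_derivative vs l0 x0) (at x0)" using dys_at[of x0 l0] x0 by auto
  obtain d1 d2 where d: "d1 > 0" "d2 > 0" and
    s: "\<forall>h>0. h < d1 \<longrightarrow> h < d2 \<longrightarrow> ys l0 (x0 - h) * ys l0 (x0 + h) < 0"
  proof (cases "vs l0 x0 > 0")
    case True
    obtain d1 where d1: "d1 > 0" "\<forall>h>0. h < d1 \<longrightarrow> ys l0 x0 < ys l0 (x0 + h)"
      using DERIV_pos_inc_right[OF dy True] by blast
    obtain d2 where d2: "d2 > 0" "\<forall>h>0. h < d2 \<longrightarrow> ys l0 (x0 - h) < ys l0 x0"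
      using DERIV_pos_inc_left[OF dy True] by blast
    show ?thesis using d1 d2 x0 by (intro that[of d1 d2]) (auto simp: mult_neg_pos)
  next
    case False
    then have neg: "vs l0 x0 < 0" using v0 by simp
    obtain d1 where d1: "d1 > 0" "\<forall>h>0. h < d1 \<longrightarrow> ys l0 x0 > ys l0 (x0 + h)"
      using DERIV_neg_dec_right[OF dy neg] by blast
    obtain d2 where d2: "d2 > 0" "\<forall>h>0. h < d2 \<longrightarrow> ys l0 (x0 - h) > ys l0 x0"
      using DERIV_neg_dec_left[OF dy neg] by blast
    show ?thesis using d1 d2 x0 by (intro that[of d1 d2]) (auto simp: mult_pos_neg)
  qed
  define mm where "mm = min (min d1 d2) (min (x0 - a) (a + 1/2 - x0))"
  have mm: "0 < mm" "mm \<le> d1" "mm \<le> d2" "mm \<le> x0 - a" "mm \<le> a + 1/2 - x0"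
    using d x0 unfolding mm_def by auto
  define h where "h = mm / 2"
  have h: "0 < h" "h < d1" "h < d2" "a < x0 - h" "x0 + h < a + 1/2"
    using mm unfolding h_def by linarith+
  define x1 where "x1 = x0 - h"
  define x2 where "x2 = x0 + h"
  have prod: "ys l0 x1 * ys l0 x2 < 0" using s h unfolding x1_def x2_def by auto
  then have ne: "ys l0 x1 \<noteq> 0" "ys l0 x2 \<noteq> 0" by auto
  define \<delta> where "\<delta> = min \<bar>ys l0 x1\<bar> \<bar>ys l0 x2\<bar> / (Cc + 1)"
  have Cc0: "0 \<le> Cc" unfolding Cc_def C2_def Eb_def by simp
  have \<delta>: "0 < \<delta>" unfolding \<delta>_def using ne Cc0 by auto
  show ?thesis
  proof (intro exI[of _ \<delta>] conjI \<delta> ballI impI)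
    fix l assume l: "l \<in> {0..Lam}" and ll: "\<bar>l - l0\<bar> < \<delta>"
    have close: "\<bar>ys l x - ys l0 x\<bar> < \<bar>ys l0 x\<bar>" if "x = x1 \<or> x = x2" for x
    proof -
      have xr: "x \<in> {a..a + 1/2}" using that h unfolding x1_def x2_def by auto
      have "\<bar>ys l x - ys l0 x\<bar> \<le> Cc * \<bar>l - l0\<bar>" using lip[OF l l0r xr] by blast
      also have "\<dots> \<le> Cc * \<delta>" using ll Cc0 by (intro mult_left_mono) auto
      also have "\<dots> < (Cc + 1) * \<delta>" using \<delta> by simp
      also have "\<dots> \<le> \<bar>ys l0 x\<bar>" unfolding \<delta>_def using that Cc0 by auto
      finally show ?thesis .
    qed
    have "0 < ys l x1 * ys l0 x1" "0 < ys l x2 * ys l0 x2" using close same_sign by auto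
    then have "ys l x1 * ys l x2 < 0" using prod
      by (auto simp: mult_less_0_iff zero_less_mult_iff)
    then obtain x where x: "x \<in> {x1..x2}" "ys l x = 0"
      using ivt_prod[of x1 x2 "ys l"] h continuous_on_subset[OF cys[of "a + 1/2" l]]
      unfolding x1_def x2_def by auto
    then show "l \<in> S" unfolding S_def using l h unfolding x1_def x2_def by auto
  qed
qed

lemma S_sub: "S \<subseteq> {0..Lam}" unfolding S_def by auto

lemma zero_in_S: "0 \<in> S"
  unfolding S_def using ac cb ys0_c Lam_pos by auto

lemma Lam_notin_S: "Lam \<notin> S"
  unfolding S_def using ys_Lam_nonzero by auto

lemma bddS: "bdd_above S" by (rule bdd_aboveI[of _ Lam]) (use S_sub in auto)

definition ls where "ls = Sup S"

lemma ls_le: "ls \<le> Lam"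
  unfolding ls_def using S_sub zero_in_S by (intro cSup_least) auto

lemma ls_pos: "0 < ls"
proof -
  obtain \<delta> where \<delta>: "\<delta> > 0" "\<forall>l\<in>{0..Lam}. \<bar>l - 0\<bar> < \<delta> \<longrightarrow> l \<in> S"
    using S_open[OF zero_in_S] by blast
  define l where "l = min (\<delta> / 2) Lam"
  have "l \<in> S" using \<delta> Lam_pos unfolding l_def by auto
  then have "l \<le> ls" unfolding ls_def by (intro cSup_upper bddS)
  moreover have "0 < l" using \<delta> Lam_pos unfolding l_def by auto
  ultimately show ?thesis by simp
qed

lemma ls_notin: "ls \<notin> S"
proof
  assume ls: "ls \<in> S"
  then have "ls \<noteq> Lam" using Lam_notin_S by auto
  then have lt: "ls < Lam" using ls_le by simp
  obtain \<delta> where \<delta>: "\<delta> > 0" "\<forall>l\<in>{0..Lam}. \<bar>l - ls\<bar> < \<delta> \<longrightarrow> l \<in> S"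
    using S_open[OF ls] by blast
  define l where "l = ls + min (\<delta> / 2) (Lam - ls)"
  have "l \<in> S" using \<delta> lt ls_pos unfolding l_def by auto
  then have "l \<le> ls" unfolding ls_def by (intro cSup_upper bddS)
  moreover have "ls < l" using \<delta> lt unfolding l_def by auto
  ultimately show False by simp
qed

lemma ys_ls_b: "ys ls (a + 1/2) = 0"
proof (rule ccontr)
  assume yb: "ys ls (a + 1/2) \<noteq> 0"
  define B where "B = a + 1/2"
  have lsr: "ls \<in> {0..Lam}" using ls_pos ls_le by auto
  have noz: "ys ls t \<noteq> 0" if "t \<in> {a<..B}" for t
  proof (cases "t = B")
    case True then show ?thesis using yb unfolding B_def by simp
  next
    case False then show ?thesis using that ls_notin lsr unfolding S_def B_def by auto
  qed
  have Cc0: "0 \<le> Cc" unfolding Cc_def C2_def Eb_def by simp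
  have "continuous_on {a..B} (vs ls)" by (rule cvs)
  then obtain \<eta> where \<eta>: "\<eta> > 0" "\<forall>t\<in>{a..B}. dist t a < \<eta> \<longrightarrow> dist (vs ls t) (vs ls a) < 1/2"
    unfolding continuous_on_iff B_def by (metis atLeastAtMost_iff half_gt_zero_iff le_add_same_cancel1 less_eq_real_def zero_less_one divide_pos_pos zero_less_numeral)
  define A where "A = a + min (\<eta> / 2) (1/4)"
  have A: "a < A" "A < B" "A - a < \<eta>" using \<eta> unfolding A_def B_def by auto
  have vpos: "1/2 < vs ls t" if "t \<in> {a..A}" for t
  proof -
    have tB: "t \<in> {a..B}" using that A by auto
    have "dist t a < \<eta>" using that A unfolding dist_real_def by auto
    then have "dist (vs ls t) (vs ls a) < 1/2" using \<eta>(2) tB by blast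
    then have "\<bar>vs ls t - 1\<bar> < 1/2" unfolding dist_real_def vs0 .
    then show ?thesis by linarith
  qed
  have cAB: "continuous_on {A..B} (\<lambda>t. \<bar>ys ls t\<bar>)"
    using continuous_on_subset[OF cys[of B ls], of "{A..B}"] A by (auto intro: continuous_intros)
  obtain t0 where t0: "t0 \<in> {A..B}" "\<forall>t\<in>{A..B}. \<bar>ys ls t0\<bar> \<le> \<bar>ys ls t\<bar>"
    using continuous_attains_inf[OF compact_Icc _ cAB] A by auto
  define m where "m = \<bar>ys ls t0\<bar>"
  have m: "0 < m" using noz[of t0] t0 A unfolding m_def by auto
  define \<delta> where "\<delta> = min (1 / (4 * (Cc + 1))) (m / (Cc + 1))"
  have \<delta>: "0 < \<delta>" unfolding \<delta>_def using m Cc0 by auto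
  have "ls - \<delta> < Sup S" using \<delta> unfolding ls_def by simp
  then obtain l where l: "l \<in> S" "ls - \<delta> < l" using less_cSupD[of S] zero_in_S by blast
  have "l \<le> ls" unfolding ls_def by (intro cSup_upper l bddS)
  then have ll: "\<bar>l - ls\<bar> < \<delta>" using l by simp
  have lr: "l \<in> {0..Lam}" using l S_sub by auto
  have dm: "(Cc + 1) * \<delta> \<le> m"
  proof -
    have "(Cc + 1) * \<delta> \<le> (Cc + 1) * (m / (Cc + 1))" unfolding \<delta>_def using Cc0 by (intro mult_left_mono) auto
    then show ?thesis using Cc0 by simp
  qed
  have d4: "(Cc + 1) * \<delta> \<le> 1/4"
  proof -
    have "(Cc + 1) * \<delta> \<le> (Cc + 1) * (1 / (4 * (Cc + 1)))" unfolding \<delta>_def using Cc0 by (intro mult_left_mono) auto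
    also have "(Cc + 1) * (1 / (4 * (Cc + 1))) = 1/4" using Cc0 by (simp add: field_simps)
    finally show ?thesis .
  qed
  have CC: "Cc * \<bar>l - ls\<bar> < (Cc + 1) * \<delta>"
  proof -
    have "Cc * \<bar>l - ls\<bar> \<le> Cc * \<delta>" using ll Cc0 by (intro mult_left_mono) auto
    also have "\<dots> < (Cc + 1) * \<delta>" using \<delta> by simp
    finally show ?thesis .
  qed
  obtain x where x: "x \<in> {a<..<B}" "ys l x = 0" using l unfolding S_def B_def by auto
  show False
  proof (cases "A \<le> x")
    case True
    have xr: "x \<in> {a..a + 1/2}" using x unfolding B_def by auto
    have "\<bar>ys l x - ys ls x\<bar> \<le> Cc * \<bar>l - ls\<bar>" using lip[OF lr lsr xr] by blast
    also have "\<dots> < (Cc + 1) * \<delta>" by (rule CC)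
    also have "\<dots> \<le> m" by (rule dm)
    also have "m \<le> \<bar>ys ls x\<bar>" unfolding m_def using t0 True x by auto
    finally show False using x by simp
  next
    case False
    have vl: "0 < vs l t" if t: "t \<in> {a..x}" for t
    proof -
      have tr: "t \<in> {a..a + 1/2}" using t x unfolding B_def by auto
      have "\<bar>vs l t - vs ls t\<bar> \<le> Cc * \<bar>l - ls\<bar>" using lip[OF lr lsr tr] by blast
      also have "\<dots> < (Cc + 1) * \<delta>" by (rule CC)
      also have "\<dots> \<le> 1/4" by (rule d4)
      finally have "\<bar>vs l t - vs ls t\<bar> < 1/4" .
      moreover have "1/2 < vs ls t" using vpos[of t] t False by auto
      ultimately show ?thesis by linarith
    qed
    have "\<exists>t\<in>{a<..<x}. ys l x - ys l a = (\<lambda>h. vs l t * h) (x - a)"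
      using x dys[of _ x l] by (intro mvt_simple) (auto simp: has_field_derivative_def)
    then obtain t where t: "t \<in> {a<..<x}" "ys l x - ys l a = vs l t * (x - a)" by auto
    have "0 < vs l t * (x - a)" using vl[of t] t x by auto
    then show False using t x ys0[of l] by simp
  qed
qed

end


lemma glue_deriv:
  fixes f :: "real \<Rightarrow> real"
  assumes l: "(f has_real_derivative D) (at x within {x - 1..x})"
    and r: "(f has_real_derivative D) (at x within {x..x + 1})"
  shows "(f has_real_derivative D) (at x)"
proof -
  have "(f has_real_derivative D) (at x within ({x - 1..x} \<union> {x..x + 1}))"
    using l r unfolding has_field_derivative_iff by (simp add: Lim_within_Un)
  moreover have "{x - 1..x} \<union> {x..x + 1} = {x - 1..x + 1}" by auto
  ultimately show ?thesis by (simp add: at_within_Icc_at)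
qed

lemma periodic_odd_integral:
  fixes h :: "real \<Rightarrow> real"
  assumes ch: "continuous_on UNIV h" and per: "\<And>x. h (x + 1) = h x"
    and odd: "\<And>x. h (2 * a + 1 - x) = - h x" and a: "0 \<le> a" "a \<le> 1"
  shows "integral {0..1} h = 0"
proof -
  have int: "h integrable_on {s..t}" for s t by (rule integrable_continuous_real[OF continuous_on_subset[OF ch]]) auto
  have I1: "integral {0..1} h = integral {0..a} h + integral {a..1} h"
    using a by (intro Henstock_Kurzweil_Integration.integral_combine[symmetric] int) auto
  have I2: "integral {a..a + 1} h = integral {a..1} h + integral {1..a + 1} h"
    using a by (intro Henstock_Kurzweil_Integration.integral_combine[symmetric] int) auto
  have "integral {0..a} (h \<circ> (+) 1) = integral {0 + 1..a + 1} h" by (rule integral_shift_Icc_real)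
  moreover have "h \<circ> (+) 1 = h" using per by (auto simp: add.commute)
  ultimately have I3: "integral {1..a + 1} h = integral {0..a} h" by simp
  have E: "integral {0..1} h = integral {a..a + 1} h" using I1 I2 I3 by simp
  define f where "f z = h (2 * a + 1 + z)" for z
  have "integral {- (- a) .. - (- (a + 1))} (\<lambda>x. f (- x)) = integral {- (a + 1) .. - a} f"
    by (rule Henstock_Kurzweil_Integration.integral_reflect_real)
  moreover have "integral {- (a + 1) .. - a} f = integral {- (a + 1) + (2 * a + 1) .. - a + (2 * a + 1)} h"
  proof -
    have "f = h \<circ> (+) (2 * a + 1)" unfolding f_def by (auto simp: add.commute)
    then show ?thesis by (simp add: integral_shift_Icc_real)
  qed
  ultimately have R: "integral {a..a + 1} (\<lambda>x. h (2 * a + 1 - x)) = integral {a..a + 1} h"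
    unfolding f_def by (simp add: algebra_simps)
  have "integral {a..a + 1} (\<lambda>x. h (2 * a + 1 - x)) = - integral {a..a + 1} h"
    by (simp add: odd integral_neg)
  then show ?thesis using E R by simp
qed

context shoot begin

lemma U_even_a: "U (2 * a - x) = U x" by (rule even_about[OF Ua])

lemma U_even_b: "U (2 * a + 1 - x) = U x"
proof -
  have "U (2 * a + 1 - x) = U (2 * a - (x - 1))" by (simp add: algebra_simps)
  also have "\<dots> = U (x - 1)" by (rule U_even_a)
  also have "\<dots> = U (x - 1 + 1)" by (rule per[symmetric])
  finally show ?thesis by simp
qed

lemma r_even_a: "r (2 * a - x) = r x" unfolding r_def by (simp add: U_even_a)
lemma r_even_b: "r (2 * a + 1 - x) = r x" unfolding r_def by (simp add: U_even_b)

definition Phi where "Phi x = (if a \<le> x then ys ls x else - ys ls (2 * a - x))"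
definition Phi1 where "Phi1 x = (if a \<le> x then vs ls x else vs ls (2 * a - x))"

lemma dPhi: "(Phi has_real_derivative Phi1 x) (at x)"
proof -
  consider "a < x" | "x < a" | "x = a" by linarith
  then show ?thesis
  proof cases
    case 1
    have "(Phi has_real_derivative vs ls x) (at x)"
      by (rule has_field_derivative_transform_within_open[OF dys_at[OF 1], where S="{a<..}"])
         (use 1 in \<open>auto simp: Phi_def Phi1_def\<close>)
    then show ?thesis using 1 by (simp add: Phi1_def)
  next
    case 2
    have "((\<lambda>t. ys ls (2 * a - t)) has_real_derivative vs ls (2 * a - x) * (-1)) (at x)"
      by (rule DERIV_chain2[OF dys_at]) (use 2 in \<open>auto intro!: derivative_eq_intros\<close>)
    then have "((\<lambda>t. - ys ls (2 * a - t)) has_real_derivative vs ls (2 * a - x)) (at x)"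
      using DERIV_minus by fastforce
    then have "(Phi has_real_derivative vs ls (2 * a - x)) (at x)"
      by (rule has_field_derivative_transform_within_open[where S="{..<a}"])
         (use 2 in \<open>auto simp: Phi_def Phi1_def\<close>)
    then show ?thesis using 2 by (simp add: Phi1_def)
  next
    case 3
    have r: "(Phi has_real_derivative vs ls a) (at a within {a..a + 1})"
      by (rule has_field_derivative_transform_within[OF dys[of a "a + 1" ls] zero_less_one])
         (auto simp: Phi_def)
    have img: "(\<lambda>t. 2 * a - t) ` {a - 1..a} = {a..a + 1}" by (simp add: algebra_simps)
    have "(ys ls \<circ> (\<lambda>t. 2 * a - t) has_real_derivative vs ls (2 * a - a) * (-1)) (at a within {a - 1..a})"
      by (rule DERIV_image_chain) (use dys[of a "a + 1" ls] img in \<open>auto intro!: derivative_eq_intros\<close>)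
    then have "((\<lambda>t. - ys ls (2 * a - t)) has_real_derivative vs ls a) (at a within {a - 1..a})"
      using DERIV_minus by (fastforce simp: o_def)
    then have l: "(Phi has_real_derivative vs ls a) (at a within {a - 1..a})"
      by (rule has_field_derivative_transform_within[OF _ zero_less_one])
         (auto simp: Phi_def ys0)
    show ?thesis using glue_deriv[OF l r] 3 by (simp add: Phi1_def)
  qed
qed

lemma dPhi1: "(Phi1 has_real_derivative (ls + r x) * Phi x) (at x)"
proof -
  consider "a < x" | "x < a" | "x = a" by linarith
  then show ?thesis
  proof cases
    case 1
    have "(Phi1 has_real_derivative (ls + r x) * ys ls x) (at x)"
      by (rule has_field_derivative_transform_within_open[OF dvs_at[OF 1], where S="{a<..}"])
         (use 1 in \<open>auto simp: Phi_def Phi1_def\<close>)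
    then show ?thesis using 1 by (simp add: Phi_def)
  next
    case 2
    have "((\<lambda>t. vs ls (2 * a - t)) has_real_derivative (ls + r (2 * a - x)) * ys ls (2 * a - x) * (-1)) (at x)"
      by (rule DERIV_chain2[OF dvs_at]) (use 2 in \<open>auto intro!: derivative_eq_intros\<close>)
    then have "((\<lambda>t. vs ls (2 * a - t)) has_real_derivative (ls + r x) * Phi x) (at x)"
      using 2 by (simp add: r_even_a Phi_def)
    then show ?thesis
      by (rule has_field_derivative_transform_within_open[where S="{..<a}"])
         (use 2 in \<open>auto simp: Phi_def Phi1_def\<close>)
  next
    case 3
    have r: "(Phi1 has_real_derivative (ls + r a) * ys ls a) (at a within {a..a + 1})"
      by (rule has_field_derivative_transform_within[OF dvs[of a "a + 1" ls] zero_less_one])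
         (auto simp: Phi1_def)
    have img: "(\<lambda>t. 2 * a - t) ` {a - 1..a} = {a..a + 1}" by (simp add: algebra_simps)
    have "(vs ls \<circ> (\<lambda>t. 2 * a - t) has_real_derivative ((ls + r (2 * a - a)) * ys ls (2 * a - a)) * (-1)) (at a within {a - 1..a})"
      by (rule DERIV_image_chain) (use dvs[of a "a + 1" ls] img in \<open>auto intro!: derivative_eq_intros\<close>)
    then have "((\<lambda>t. vs ls (2 * a - t)) has_real_derivative (ls + r a) * ys ls a) (at a within {a - 1..a})"
      by (simp add: o_def ys0)
    then have l: "(Phi1 has_real_derivative (ls + r a) * ys ls a) (at a within {a - 1..a})"
      by (rule has_field_derivative_transform_within[OF _ zero_less_one])
         (auto simp: Phi1_def)
    show ?thesis using glue_deriv[OF l r] 3 by (simp add: Phi_def)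
  qed
qed

lemma Phi_odd_a: "Phi (2 * a - x) = - Phi x"
  unfolding Phi_def using ys0[of ls] by auto

lemma Phi_refl_deriv: "((\<lambda>t. Phi (cc - t)) has_real_derivative - Phi1 (cc - t)) (at t)"
proof -
  have "((\<lambda>t. Phi (cc - t)) has_real_derivative Phi1 (cc - t) * (-1)) (at t)"
    by (rule DERIV_chain2[OF dPhi]) (auto intro!: derivative_eq_intros)
  then show ?thesis by simp
qed

lemma Phi1_refl_deriv: "((\<lambda>t. Phi1 (cc - t)) has_real_derivative - ((ls + r (cc - t)) * Phi (cc - t))) (at t)"
proof -
  have "((\<lambda>t. Phi1 (cc - t)) has_real_derivative (ls + r (cc - t)) * Phi (cc - t) * (-1)) (at t)"
    by (rule DERIV_chain2[OF dPhi1]) (auto intro!: derivative_eq_intros)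
  then show ?thesis by simp
qed

lemma Phi_odd_b: "Phi (2 * a + 1 - x) = - Phi x"
proof -
  define cc where "cc = 2 * a + 1"
  define w where "w t = Phi t + Phi (cc - t)" for t
  define u where "u t = Phi1 t - Phi1 (cc - t)" for t
  define z where "z t = (ls + r t) * w t" for t
  have main: "w x = 0" if x: "a + 1/2 \<le> x" for x
  proof -
    have dw: "(w has_real_derivative u t) (at t within {a + 1/2..x})" for t
    proof -
      have "(w has_real_derivative Phi1 t + - Phi1 (cc - t)) (at t)"
        unfolding w_def by (rule DERIV_add[OF dPhi Phi_refl_deriv])
      then show ?thesis unfolding u_def by (simp add: has_field_derivative_at_within)
    qed
    have du: "(u has_real_derivative z t) (at t within {a + 1/2..x})" for t
    proof -
      have "(u has_real_derivative (ls + r t) * Phi t - - ((ls + r (cc - t)) * Phi (cc - t))) (at t)"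
        unfolding u_def by (rule DERIV_diff[OF dPhi1 Phi1_refl_deriv])
      moreover have "r (cc - t) = r t" unfolding cc_def by (rule r_even_b)
      ultimately show ?thesis unfolding z_def w_def by (simp add: has_field_derivative_at_within algebra_simps)
    qed
    have bd: "\<bar>z t\<bar> \<le> (ls + LF) * \<bar>w t\<bar>" for t
      unfolding z_def abs_mult using r_bdd[of t] ls_pos by (intro mult_right_mono) auto
    have w0: "w (a + 1/2) = 0" unfolding w_def cc_def Phi_def using ys_ls_b by auto
    have u0: "u (a + 1/2) = 0" unfolding u_def cc_def by simp
    have "w x = 0 \<and> u x = 0"
      by (rule ode_unique[OF dw du bd _ w0 u0]) (use x ls_pos LF_nonneg in auto)
    then show ?thesis by simp
  qed
  have "w x = 0"
  proof (cases "a + 1/2 \<le> x")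
    case True then show ?thesis by (rule main)
  next
    case False
    then have "w (cc - x) = 0" by (intro main) (simp add: cc_def)
    then show ?thesis unfolding w_def by (simp add: add.commute)
  qed
  then show ?thesis unfolding w_def cc_def by simp
qed

lemma Phi_per: "Phi (x + 1) = Phi x"
proof -
  have "Phi (x + 1) = - Phi (2 * a + 1 - (x + 1))" using Phi_odd_b[of "x + 1"] by simp
  also have "\<dots> = - Phi (2 * a - x)" by simp
  also have "\<dots> = Phi x" by (simp add: Phi_odd_a)
  finally show ?thesis .
qed

lemma cPhi: "continuous_on T Phi"
  using dPhi by (intro continuous_at_imp_continuous_on) (auto intro: DERIV_isCont)

lemma Phi1_a: "Phi1 a = 1" unfolding Phi1_def by (simp add: vs0)

lemma Phi_nonzero: "\<exists>x. Phi x \<noteq> 0"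
proof (rule ccontr)
  assume "\<not> (\<exists>x. Phi x \<noteq> 0)"
  then have "Phi = (\<lambda>_. 0)" by auto
  then have "((\<lambda>_. 0) has_real_derivative 1) (at a)" using dPhi[of a] Phi1_a by simp
  then show False using DERIV_unique[OF _ DERIV_const] by fastforce
qed

lemma int_zero:
  assumes "0 \<le> a" "a \<le> 1"
  shows "integral {0..1} (\<lambda>y. exp (U y) * Phi y) = 0"
proof (rule periodic_odd_integral[where a=a])
  show "continuous_on UNIV (\<lambda>y. exp (U y) * Phi y)" by (rule continuous_on_mult[OF continuous_on_exp[OF cU] cPhi])
  show "exp (U (x + 1)) * Phi (x + 1) = exp (U x) * Phi x" for x by (simp add: per Phi_per)
  show "exp (U (2 * a + 1 - x)) * Phi (2 * a + 1 - x) = - (exp (U x) * Phi x)" for x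
    by (simp add: U_even_b Phi_odd_b)
qed (use assms in auto)

end


theorem mainTheorem10:
  fixes D \<kappa> :: real and U :: "real \<Rightarrow> real"
  assumes "D > 0" and "\<kappa> > 0"
    and "stationary_solution D \<kappa> U"
    and "\<not> (\<exists>c. \<forall>x. U x = c)"
    and "\<exists>x1 x2 x3. x1 \<in> {0..<1} \<and> x2 \<in> {0..<1} \<and> x3 \<in> {0..<1} \<and>
           x1 \<noteq> x2 \<and> x1 \<noteq> x3 \<and> x2 \<noteq> x3 \<and>
           deriv U x1 = 0 \<and> deriv U x2 = 0 \<and> deriv U x3 = 0"
  shows "linearly_unstable D \<kappa> U"
proof -
  define I where "I = integral {0..1} (\<lambda>y. exp (U y))"
  obtain U1 where per: "\<forall>x. U (x + 1) = U x" and dU: "\<forall>x. (U has_real_derivative U1 x) (at x)"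
    and dU1: "\<forall>x. (U1 has_real_derivative (U x - \<kappa> * exp (U x) / I) / D) (at x)"
    using stationary_regular[OF assms(1,3)] unfolding I_def by blast
  interpret st: stat D \<kappa> I U U1 using assms(1) per dU dU1 by unfold_locales auto
  obtain x1 x2 x3 where xs: "x1 \<in> {0..<1}" "x2 \<in> {0..<1}" "x3 \<in> {0..<1}"
    "x1 \<noteq> x2" "x1 \<noteq> x3" "x2 \<noteq> x3" "deriv U x1 = 0" "deriv U x2 = 0" "deriv U x3 = 0"
    using assms(5) by blast
  have dz: "deriv U x = U1 x" for x using DERIV_imp_deriv[OF st.dU] .
  define a where "a = x1"
  have Ua: "U1 a = 0" using xs dz unfolding a_def by simp
  have Ueb: "U (2 * a + 1 - x) = U x" for x
  proof -
    have "U (2 * a + 1 - x) = U (2 * a - (x - 1))" by (simp add: algebra_simps)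
    also have "\<dots> = U (x - 1)" by (rule st.even_about[OF Ua])
    also have "\<dots> = U (x - 1 + 1)" by (rule st.per[symmetric])
    finally show ?thesis by simp
  qed
  have U1ob: "U1 (2 * a + 1 - x) = - U1 x" for x by (rule st.odd_deriv) (rule Ueb)
  have nu: "st.F (U a) \<noteq> 0"
  proof
    assume "st.F (U a) = 0"
    then have "\<forall>x. U x = U a" using st.const_of_equil[OF Ua] by blast
    then show False using assms(4) by blast
  qed
  define sh where "sh z = (if a < z then z else z + 1)" for z
  have shp: "sh z \<in> {a<..<a + 1} \<and> U1 (sh z) = 0" if "z \<in> {0..<1}" "z \<noteq> a" "U1 z = 0" for z
    using that xs(1) st.per1[of z] unfolding sh_def a_def by auto
  have z2: "sh x2 \<in> {a<..<a + 1}" "U1 (sh x2) = 0" using shp[of x2] xs dz unfolding a_def by auto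
  have z3: "sh x3 \<in> {a<..<a + 1}" "U1 (sh x3) = 0" using shp[of x3] xs dz unfolding a_def by auto
  have ne: "sh x2 \<noteq> sh x3" using xs unfolding sh_def a_def by auto
  obtain t where t: "t \<in> {a<..<a + 1}" "t \<noteq> a + 1/2" "U1 t = 0"
    using z2 z3 ne by metis
  obtain c where c: "a < c" "c < a + 1/2" "U1 c = 0"
  proof (cases "t < a + 1/2")
    case True then show ?thesis using t that[of t] by auto
  next
    case False
    then show ?thesis using t that[of "2 * a + 1 - t"] U1ob[of t] by auto
  qed
  interpret sh: shoot D \<kappa> I U U1 a c
    by unfold_locales (use Ua nu c in auto)
  define \<phi> where "\<phi> x = complex_of_real (sh.Phi x)" for x
  define g where "g x = complex_of_real ((sh.ls + st.r x) * sh.Phi x)" for x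
  define \<mu> where "\<mu> = complex_of_real (D * sh.ls)"
  have pw: "per_weak_dd \<phi> g"
    unfolding per_weak_dd_def
  proof (intro conjI)
    show "\<forall>x. \<phi> (x + 1) = \<phi> x" unfolding \<phi>_def by (simp add: sh.Phi_per)
    have d1: "(\<phi> has_vector_derivative complex_of_real (sh.Phi1 x)) (at x)" for x
      unfolding \<phi>_def by (rule has_vector_derivative_of_real[OF sh.dPhi])
    have d2: "((\<lambda>x. complex_of_real (sh.Phi1 x)) has_vector_derivative g x) (at x within T)" for x T
      unfolding g_def by (rule has_vector_derivative_at_within[OF has_vector_derivative_of_real[OF sh.dPhi1]])
    show "\<exists>f'. (\<forall>x. (\<phi> has_vector_derivative f' x) (at x)) \<and>
          (\<forall>a b. a \<le> b \<longrightarrow> (g has_integral f' b - f' a) {a..b})"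
      using d1 d2 by (intro exI[of _ "\<lambda>x. complex_of_real (sh.Phi1 x)"]) (auto intro: fundamental_theorem_of_calculus)
    have "continuous_on {0..1} (\<lambda>x. (norm (g x))\<^sup>2)"
      unfolding g_def by (intro continuous_intros st.cr sh.cPhi)
    then show "(\<lambda>x. (norm (g x))\<^sup>2) integrable_on {0..1}" by (rule integrable_continuous_real)
  qed
  have nz: "\<phi> \<noteq> (\<lambda>_. 0)"
  proof
    assume "\<phi> = (\<lambda>_. 0)"
    then have "sh.Phi x = 0" for x unfolding \<phi>_def by (metis of_real_eq_0_iff)
    then show False using sh.Phi_nonzero by blast
  qed
  have iz: "integral {0..1} (\<lambda>y. complex_of_real (exp (U y)) * \<phi> y) = 0"
  proof -
    have h: "((\<lambda>y. exp (U y) * sh.Phi y) has_integral 0) {0..1}"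
    proof -
      have "(\<lambda>y. exp (U y) * sh.Phi y) integrable_on {0..1}"
        by (rule integrable_continuous_real) (intro continuous_on_mult[OF continuous_on_exp[OF st.cU] sh.cPhi])
      then show ?thesis using sh.int_zero xs(1) unfolding a_def by (metis atLeastLessThan_iff has_integral_integrable_integral less_imp_le)
    qed
    have "((\<lambda>y. complex_of_real (exp (U y) * sh.Phi y)) has_integral complex_of_real 0) {0..1}"
      using has_integral_linear[OF h bounded_linear_of_real] by (simp add: o_def)
    then show ?thesis unfolding \<phi>_def by (simp add: integral_unique)
  qed
  have eq: "complex_of_real D * g x + complex_of_real (\<kappa> * exp (U x) / I - 1) * \<phi> x
           - complex_of_real (\<kappa> * exp (U x) / I\<^sup>2) * integral {0..1} (\<lambda>y. complex_of_real (exp (U y)) * \<phi> y)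
           = \<mu> * \<phi> x" for x
  proof -
    have re: "D * ((sh.ls + st.r x) * sh.Phi x) + (\<kappa> * exp (U x) / I - 1) * sh.Phi x = D * sh.ls * sh.Phi x"
      unfolding st.r_def using assms(1) by (simp add: field_simps)
    have "complex_of_real D * g x + complex_of_real (\<kappa> * exp (U x) / I - 1) * \<phi> x
        = complex_of_real (D * ((sh.ls + st.r x) * sh.Phi x) + (\<kappa> * exp (U x) / I - 1) * sh.Phi x)"
      unfolding g_def \<phi>_def by simp
    also have "\<dots> = \<mu> * \<phi> x" unfolding re \<mu>_def \<phi>_def by simp
    finally show ?thesis using iz by simp
  qed
  have "lin_eigenvalue D \<kappa> U \<mu>"
    unfolding lin_eigenvalue_def Let_def I_def[symmetric]
    using pw nz eq by (intro exI[of _ \<phi>] exI[of _ g]) (auto intro: AE_I2)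
  moreover have "Re \<mu> > 0" unfolding \<mu>_def using assms(1) sh.ls_pos by simp
  ultimately show ?thesis unfolding linearly_unstable_def by blast
qed

end
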